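(* For every partition $\lambda$ with $\ell(\lambda)\le2$, $\mathbb B_2^{(0)}\mathbb H_\lambda=\mathbb H_{\lambda+1^2}$, where $\lambda+1^2=(\lambda_1+1,\lambda_2+1)$.
   Context: Tableaux (French convention: rows of lengths $\lambda_1\ge\lambda_2\ge\cdots$ from bottom to top). A tableau is identified with (shape, reading word), the reading word listing the entries row by row from top row to bottom row, each row left to right; word operators act on tableaux via reading words, keeping the shape. Semistandard: rows weakly increase left to right, columns strictly increase upwards. Standard of degree $n$: semistandard with entries $1,\dots,n$ each once. For a word $w$, $\mathrm{ev}(w)=(\mathrm{ev}_1,\mathrm{ev}_2,\dots)$ with $\mathrm{ev}_i$ the number of occurrences of $i$. Word operators (compositions act right to left): $\tau_1$ adds $1$ to every letter; $r_{(11\to01)}$, on a word with exactly two letters $1$, replaces the first by $0$; for a word with $(\mathrm{ev}_a,\mathrm{ev}_{a+1})\in\{(1,2),(2,1)\}$, $\sigma_a$ replaces the subword of letters in $\{a,b\}$, $b=a+1$, in place, via $aab\leftrightarrow abb$, $aba\leftrightarrow bba$, $baa\leftrightarrow bab$. For a tableau $T$ of degree $n$, $A_{n+1,n+1}T$ is the sum of all tableaux obtained by adding two cells containing $n+1$ so that the new shape is a partition diagram and the two new cells lie in different columns. Operators extend linearly to $\mathbb Z$-linear combinations of tableaux. For standard $T$ of degree $n$: $\mathbb B_2^{(0)}T=\tau_1r_{(11\to01)}\sigma_1\sigma_2\cdots\sigma_nA_{n+1,n+1}T$. Standardization $VS$: for a semistandard tableau $T$ with letters $1,\dots,k$ and each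 $\mathrm{ev}_i\in\{1,2\}$, repeat: (1) if $\mathrm{ev}_1=2$, replace $T$ by $\tau_1r_{(11\to01)}T$; (2) if every letter occurs once, stop and output $T$; otherwise, with $i$ the smallest letter having $\mathrm{ev}_i=2$, replace $T$ by $\sigma_1\sigma_2\cdots\sigma_{i-1}T$ and return to (1). For a partition $\lambda$ with $\ell(\lambda)\le2$ with conjugate $\lambda'$, $\mathbb H_\lambda=\sum VS(T)$, summed over all semistandard tableaux $T$ with $\mathrm{ev}(T)=\lambda'$ (i.e. letters $1,\dots,\lambda_1$, letter $i$ occurring $\lambda'_i$ times); $\mathbb H_\emptyset$ is the empty tableau. *)

theory Defs
  imports Main "HOL-Library.While_Combinator"
begin

type_synonym word = "nat list"
text \<open>A tableau is (shape, reading word). The shape lists row lengths from the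
  bottom row upwards (French convention); the reading word lists the rows from
  the top row down to the bottom row, each row left to right.\<close>
type_synonym tableau = "nat list \<times> nat list"

definition ev :: "word \<Rightarrow> nat \<Rightarrow> nat" where
  "ev w i = count_list w i"

definition is_partition :: "nat list \<Rightarrow> bool" where
  "is_partition sh \<longleftrightarrow> sorted_wrt (\<ge>) sh \<and> 0 \<notin> set sh"

definition pget :: "nat list \<Rightarrow> nat \<Rightarrow> nat" where
  "pget sh i = (if i < length sh then sh ! i else 0)"

fun split_by :: "nat list \<Rightarrow> 'a list \<Rightarrow> 'a list list" where
  "split_by [] w = []"
| "split_by (l # ls) w = take l w # split_by ls (drop l w)"

text \<open>Rows of a tableau, bottom row first (row 0 is the bottom row).\<close>
definition rows :: "tableau \<Rightarrow> nat list list" where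
  "rows T = rev (split_by (rev (fst T)) (snd T))"

definition entry :: "tableau \<Rightarrow> nat \<Rightarrow> nat \<Rightarrow> nat" where
  "entry T i j = rows T ! i ! j"

definition semistandard :: "tableau \<Rightarrow> bool" where
  "semistandard T \<longleftrightarrow>
     is_partition (fst T) \<and> length (snd T) = sum_list (fst T) \<and>
     (\<forall>i < length (fst T). \<forall>j. Suc j < fst T ! i \<longrightarrow> entry T i j \<le> entry T i (Suc j)) \<and>
     (\<forall>i. Suc i < length (fst T) \<longrightarrow>
        (\<forall>j < fst T ! Suc i. entry T i j < entry T (Suc i) j))"

definition standard :: "nat \<Rightarrow> tableau \<Rightarrow> bool" where
  "standard n T \<longleftrightarrow> semistandard T \<and> sort (snd T) = [1..<Suc n]"

definition tau1 :: "word \<Rightarrow> word" where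
  "tau1 w = map Suc w"

fun first_one_to_zero :: "word \<Rightarrow> word" where
  "first_one_to_zero [] = []"
| "first_one_to_zero (x # xs) = (if x = 1 then 0 # xs else x # first_one_to_zero xs)"

text \<open>r_(11->01): only meaningful when there are exactly two letters 1;
  otherwise (never used) the word is left unchanged.\<close>
definition r1101 :: "word \<Rightarrow> word" where
  "r1101 w = (if ev w 1 = 2 then first_one_to_zero w else w)"

fun fill_sub :: "(nat \<Rightarrow> bool) \<Rightarrow> word \<Rightarrow> word \<Rightarrow> word" where
  "fill_sub P [] s = []"
| "fill_sub P (x # xs) s =
     (if P x then (case s of [] \<Rightarrow> x # fill_sub P xs [] | y # ys \<Rightarrow> y # fill_sub P xs ys)
      else x # fill_sub P xs s)"

definition sig3 :: "nat \<Rightarrow> word \<Rightarrow> word" where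
  "sig3 a u = (let b = Suc a in
     if u = [a,a,b] then [a,b,b] else if u = [a,b,b] then [a,a,b]
     else if u = [a,b,a] then [b,b,a] else if u = [b,b,a] then [a,b,a]
     else if u = [b,a,a] then [b,a,b] else if u = [b,a,b] then [b,a,a]
     else u)"

text \<open>sigma_a: only meaningful when (ev_a, ev_(a+1)) is (1,2) or (2,1);
  otherwise (never used) the word is left unchanged.\<close>
definition sigma :: "nat \<Rightarrow> word \<Rightarrow> word" where
  "sigma a w = (let b = Suc a; P = (\<lambda>x. x = a \<or> x = b) in
     if (ev w a, ev w b) \<in> {(1,2),(2,1)} then fill_sub P w (sig3 a (filter P w)) else w)"

text \<open>sigma_1 sigma_2 ... sigma_k (sigma_k acts first).\<close>
definition sigma_chain :: "nat \<Rightarrow> word \<Rightarrow> word" where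
  "sigma_chain k w = foldr sigma [1..<Suc k] w"

definition on_tab :: "(word \<Rightarrow> word) \<Rightarrow> tableau \<Rightarrow> tableau" where
  "on_tab f T = (fst T, f (snd T))"

type_synonym lincomb = "tableau \<Rightarrow> int"

definition delta :: "tableau \<Rightarrow> lincomb" where
  "delta T = (\<lambda>S. if S = T then 1 else 0)"

text \<open>Linear extension of a map from tableaux to linear combinations
  (combinations are finitely supported).\<close>
definition lin :: "(tableau \<Rightarrow> lincomb) \<Rightarrow> lincomb \<Rightarrow> lincomb" where
  "lin f c = (\<lambda>S. \<Sum>T \<in> {T. c T \<noteq> 0}. c T * f T S)"

text \<open>Shapes obtained from sh by adding two cells, no two in the same column.\<close>
definition add2_shapes :: "nat list \<Rightarrow> nat list set" where
  "add2_shapes sh = {sh'. is_partition sh' \<and> sum_list sh' = sum_list sh + 2 \<and>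
       (\<forall>i. pget sh i \<le> pget sh' i) \<and> (\<forall>i. pget sh' (Suc i) \<le> pget sh i)}"

definition add_cells :: "nat \<Rightarrow> tableau \<Rightarrow> nat list \<Rightarrow> tableau" where
  "add_cells m T sh' = (sh', concat (rev (map (\<lambda>i.
      (if i < length (fst T) then rows T ! i else []) @ replicate (sh' ! i - pget (fst T) i) m)
      [0..<length sh'])))"

definition A_op :: "nat \<Rightarrow> tableau \<Rightarrow> lincomb" where
  "A_op n T = (\<lambda>S. \<Sum>sh' \<in> add2_shapes (fst T). delta (add_cells (Suc n) T sh') S)"

text \<open>B_2^(0) T = tau1 r_(11->01) sigma_1 ... sigma_n A_{n+1,n+1} T, T standard of degree n.\<close>
definition B20_tab :: "tableau \<Rightarrow> lincomb" where
  "B20_tab T = (let n = length (snd T) in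
     lin (\<lambda>S. delta (on_tab (tau1 \<circ> r1101 \<circ> sigma_chain n) S)) (A_op n T))"

definition B20 :: "lincomb \<Rightarrow> lincomb" where
  "B20 c = lin B20_tab c"

definition step1 :: "tableau \<Rightarrow> tableau" where
  "step1 T = (if ev (snd T) 1 = 2 then on_tab (tau1 \<circ> r1101) T else T)"

definition step2 :: "tableau \<Rightarrow> tableau" where
  "step2 T = (let i = (LEAST i. ev (snd T) i = 2) in on_tab (sigma_chain (i - 1)) T)"

definition VS :: "tableau \<Rightarrow> tableau" where
  "VS T = the (while_option (\<lambda>T. \<not> distinct (snd T)) (step1 \<circ> step2) (step1 T))"

definition conj_part :: "nat list \<Rightarrow> nat \<Rightarrow> nat" where
  "conj_part lam i = (if i = 0 then 0 else length (filter (\<lambda>p. i \<le> p) lam))"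

definition H :: "nat list \<Rightarrow> lincomb" where
  "H lam = lin (\<lambda>T. delta (VS T))
     (\<lambda>T. if semistandard T \<and> (\<forall>i. ev (snd T) i = conj_part lam i) then 1 else 0)"

definition plus11 :: "nat list \<Rightarrow> nat list" where
  "plus11 lam = [pget lam 0 + 1, pget lam 1 + 1]"

end

theory Submission
  imports Defs "HOL-Library.While_Combinator"
begin


lemma length_fill_sub[simp]: "length (fill_sub P w s) = length w"
  by (induction P w s rule: fill_sub.induct) (auto split: list.splits)

lemma fill_sub_Nil[simp]: "fill_sub P w [] = w"
  by (induction w) auto

lemma fill_sub_nth:
  "length s = length (filter P w) \<Longrightarrow> k < length w \<Longrightarrow>
   fill_sub P w s ! k = (if P (w!k) then s ! length (filter P (take k w)) else w!k)"
proof (induction w arbitrary: s k)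
  case Nil then show ?case by simp
next
  case (Cons x w)
  show ?case
  proof (cases "P x")
    case True
    then obtain y ys where s: "s = y # ys" using Cons.prems by (cases s) auto
    show ?thesis using Cons True s by (cases k) auto
  next
    case False
    then show ?thesis using Cons by (cases k) auto
  qed
qed

lemma fill_sub_self: "fill_sub P w (filter P w) = w"
  by (induction w) auto

lemma filter_fill_sub: "length s = length (filter P w) \<Longrightarrow> set s \<subseteq> Collect P \<Longrightarrow> filter P (fill_sub P w s) = s"
proof (induction w arbitrary: s)
  case Nil then show ?case by simp
next
  case (Cons x w) then show ?case by (cases s) auto
qed

lemma filter_fill_sub_other: "set s \<inter> Collect Q = {} \<Longrightarrow> (\<And>x. P x \<Longrightarrow> \<not> Q x) \<Longrightarrow> filter Q (fill_sub P w s) = filter Q w"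
proof (induction w arbitrary: s)
  case Nil then show ?case by simp
next
  case (Cons x w) then show ?case by (cases s) auto
qed

lemma fill_sub_fill_sub: "length s = length (filter P w) \<Longrightarrow> set s \<subseteq> Collect P \<Longrightarrow> length t = length s \<Longrightarrow> fill_sub P (fill_sub P w s) t = fill_sub P w t"
proof (induction w arbitrary: s t)
  case Nil then show ?case by simp
next
  case (Cons x w) then show ?case by (cases s; cases t) auto
qed

lemma fill_sub_commute:
  assumes "set s1 \<inter> Collect Q = {}" "set s2 \<inter> Collect P = {}" "\<And>x. P x \<Longrightarrow> \<not> Q x"
  shows "fill_sub Q (fill_sub P w s1) s2 = fill_sub P (fill_sub Q w s2) s1"
  using assms
proof (induction w arbitrary: s1 s2)
  case Nil then show ?case by simp
next
  case (Cons x w) then show ?case by (cases s1; cases s2) auto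
qed

lemma count_fill_sub:
  "length s = length (filter P w) \<Longrightarrow>
   count_list (fill_sub P w s) x = count_list (filter (\<lambda>y. \<not> P y) w) x + count_list s x"
proof (induction w arbitrary: s)
  case Nil then show ?case by simp
next
  case (Cons y w) then show ?case by (cases s) auto
qed

lemma map_fill_sub: "(\<And>x. P' (f x) = P x) \<Longrightarrow> map f (fill_sub P w s) = fill_sub P' (map f w) (map f s)"
proof (induction w arbitrary: s)
  case Nil then show ?case by simp
next
  case (Cons y w) then show ?case by (cases s) auto
qed


definition Pa :: "nat \<Rightarrow> nat \<Rightarrow> bool" where "Pa a = (\<lambda>x. x = a \<or> x = Suc a)"

definition scond :: "nat \<Rightarrow> word \<Rightarrow> bool" where
  "scond a w \<longleftrightarrow> (ev w a, ev w (Suc a)) \<in> {(1,2),(2,1)}"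

lemma sigma_alt: "sigma a w = (if scond a w then fill_sub (Pa a) w (sig3 a (filter (Pa a) w)) else w)"
  unfolding sigma_def scond_def Pa_def Let_def by simp

lemma length_two_letters: "set u \<subseteq> {a, b} \<Longrightarrow> a \<noteq> b \<Longrightarrow> length u = count_list u a + count_list u b"
  by (induction u) auto

lemma count_filter_Pa: "count_list (filter (Pa a) w) x = (if x = a \<or> x = Suc a then count_list w x else 0)"
  by (induction w) (auto simp: Pa_def)

lemma filter_Pa_cases:
  assumes "scond a w"
  shows "filter (Pa a) w \<in> {[a,Suc a,Suc a],[Suc a,a,Suc a],[Suc a,Suc a,a],[a,a,Suc a],[a,Suc a,a],[Suc a,a,a]}"
proof -
  let ?u = "filter (Pa a) w"
  have s: "set ?u \<subseteq> {a, Suc a}" by (auto simp: Pa_def)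
  have c: "(count_list ?u a, count_list ?u (Suc a)) \<in> {(1,2),(2,1)}"
    using assms by (simp add: count_filter_Pa scond_def ev_def)
  have l: "length ?u = 3" using length_two_letters[OF s] c by auto
  then obtain x y z where u: "?u = [x,y,z]"
    by (metis (no_types, lifting) length_0_conv length_Suc_conv numeral_3_eq_3)
  from s u have "x \<in> {a, Suc a}" "y \<in> {a, Suc a}" "z \<in> {a, Suc a}" by auto
  then show ?thesis using c u by auto
qed

lemma sig3_cases:
  "u \<in> {[a,Suc a,Suc a],[Suc a,a,Suc a],[Suc a,Suc a,a],[a,a,Suc a],[a,Suc a,a],[Suc a,a,a]} \<Longrightarrow>
   (u = [a,a,Suc a] \<and> sig3 a u = [a,Suc a,Suc a]) \<or> (u = [a,Suc a,Suc a] \<and> sig3 a u = [a,a,Suc a]) \<or>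
   (u = [a,Suc a,a] \<and> sig3 a u = [Suc a,Suc a,a]) \<or> (u = [Suc a,Suc a,a] \<and> sig3 a u = [a,Suc a,a]) \<or>
   (u = [Suc a,a,a] \<and> sig3 a u = [Suc a,a,Suc a]) \<or> (u = [Suc a,a,Suc a] \<and> sig3 a u = [Suc a,a,a])"
  unfolding sig3_def Let_def by auto

lemma sig3_props:
  assumes "scond a w"
  shows "length (sig3 a (filter (Pa a) w)) = length (filter (Pa a) w)"
    "set (sig3 a (filter (Pa a) w)) \<subseteq> Collect (Pa a)"
    "count_list (sig3 a (filter (Pa a) w)) a = count_list w (Suc a)"
    "count_list (sig3 a (filter (Pa a) w)) (Suc a) = count_list w a"
    "sig3 a (sig3 a (filter (Pa a) w)) = filter (Pa a) w"
proof -
  have c: "(count_list w a, count_list w (Suc a)) \<in> {(1,2),(2,1)}"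
    using assms by (simp add: scond_def ev_def)
  have e: "count_list (filter (Pa a) w) a = count_list w a" "count_list (filter (Pa a) w) (Suc a) = count_list w (Suc a)"
    by (auto simp: count_filter_Pa)
  from sig3_cases[OF filter_Pa_cases[OF assms]]
  show "length (sig3 a (filter (Pa a) w)) = length (filter (Pa a) w)"
    "set (sig3 a (filter (Pa a) w)) \<subseteq> Collect (Pa a)"
    "count_list (sig3 a (filter (Pa a) w)) a = count_list w (Suc a)"
    "count_list (sig3 a (filter (Pa a) w)) (Suc a) = count_list w a"
    "sig3 a (sig3 a (filter (Pa a) w)) = filter (Pa a) w"
    using c e by (auto simp: Pa_def sig3_def)
qed

lemma count_filter_not_Pa: "count_list (filter (\<lambda>y. \<not> Pa a y) w) x = (if x = a \<or> x = Suc a then 0 else count_list w x)"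
  by (induction w) (auto simp: Pa_def)

lemma sigma_ev:
  assumes "scond a w"
  shows "ev (sigma a w) x = (if x = a then ev w (Suc a) else if x = Suc a then ev w a else ev w x)"
proof -
  have "count_list (sig3 a (filter (Pa a) w)) x = 0" if "x \<noteq> a" "x \<noteq> Suc a"
    using sig3_props(2)[OF assms] that by (auto simp: Pa_def count_list_0_iff)
  then show ?thesis using assms sig3_props[OF assms]
    by (auto simp: sigma_alt ev_def count_fill_sub count_filter_not_Pa)
qed

lemma length_sigma[simp]: "length (sigma a w) = length w"
  by (simp add: sigma_alt)

lemma scond_sigma: "scond a w \<Longrightarrow> scond a (sigma a w)"
  using sigma_ev[of a w] by (auto simp: scond_def)

lemma filter_sigma: "scond a w \<Longrightarrow> filter (Pa a) (sigma a w) = sig3 a (filter (Pa a) w)"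
  using sig3_props by (simp add: sigma_alt filter_fill_sub)

lemma sigma_invol: "scond a w \<Longrightarrow> sigma a (sigma a w) = w"
proof -
  assume a: "scond a w"
  have "sigma a (sigma a w) = fill_sub (Pa a) (sigma a w) (sig3 a (sig3 a (filter (Pa a) w)))"
    using scond_sigma[OF a] filter_sigma[OF a] by (simp add: sigma_alt[of a "sigma a w"])
  also have "\<dots> = fill_sub (Pa a) (sigma a w) (filter (Pa a) w)" using sig3_props(5)[OF a] by simp
  also have "\<dots> = fill_sub (Pa a) w (filter (Pa a) w)"
    using a sig3_props[OF a] by (simp add: sigma_alt fill_sub_fill_sub)
  also have "\<dots> = w" by (rule fill_sub_self)
  finally show ?thesis .
qed

lemma sigma_ev_other: "x \<noteq> a \<Longrightarrow> x \<noteq> Suc a \<Longrightarrow> ev (sigma a w) x = ev w x"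
  by (cases "scond a w") (auto simp: sigma_ev, simp add: sigma_alt)

lemma filter_sigma_other: "\<not> Q a \<Longrightarrow> \<not> Q (Suc a) \<Longrightarrow> filter Q (sigma a w) = filter Q w"
proof (cases "scond a w")
  case True
  assume q: "\<not> Q a" "\<not> Q (Suc a)"
  have "set (sig3 a (filter (Pa a) w)) \<inter> Collect Q = {}" using sig3_props(2)[OF True] q by (auto simp: Pa_def)
  then show ?thesis using True q by (auto simp: sigma_alt Pa_def intro!: filter_fill_sub_other)
qed (simp add: sigma_alt)

lemma sigma_commute:
  assumes "Suc a < c"
  shows "sigma a (sigma c w) = sigma c (sigma a w)"
proof -
  have sa: "scond a (sigma c w) = scond a w" using assms by (simp add: scond_def sigma_ev_other)
  have sc: "scond c (sigma a w) = scond c w" using assms by (simp add: scond_def sigma_ev_other)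
  have fa: "filter (Pa a) (sigma c w) = filter (Pa a) w" using assms by (intro filter_sigma_other) (auto simp: Pa_def)
  have fc: "filter (Pa c) (sigma a w) = filter (Pa c) w" using assms by (intro filter_sigma_other) (auto simp: Pa_def)
  show ?thesis
  proof (cases "scond a w"; cases "scond c w")
    assume A: "scond a w" and C: "scond c w"
    have "fill_sub (Pa a) (fill_sub (Pa c) w (sig3 c (filter (Pa c) w))) (sig3 a (filter (Pa a) w)) =
          fill_sub (Pa c) (fill_sub (Pa a) w (sig3 a (filter (Pa a) w))) (sig3 c (filter (Pa c) w))"
      by (rule fill_sub_commute) (use sig3_props(2)[OF A] sig3_props(2)[OF C] assms in \<open>auto simp: Pa_def\<close>)
    then show ?thesis using A C sa sc fa fc by (simp add: sigma_alt[of a] sigma_alt[of c])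
  qed (use sa sc in \<open>auto simp: sigma_alt[of a] sigma_alt[of c]\<close>)
qed

lemma ev_tau1: "ev (tau1 w) (Suc x) = ev w x" "ev (tau1 w) 0 = 0"
  by (induction w) (auto simp: tau1_def ev_def)

lemma Pa_Suc: "Pa (Suc a) (Suc x) = Pa a x" by (auto simp: Pa_def)

lemma sig3_Suc: "sig3 (Suc a) (map Suc u) = map Suc (sig3 a u)"
  unfolding sig3_def Let_def by (auto simp: map_eq_Cons_conv)

lemma filter_map_Suc: "filter (Pa (Suc a)) (map Suc w) = map Suc (filter (Pa a) w)"
  by (induction w) (auto simp: Pa_def)

lemma tau1_sigma: "tau1 (sigma a w) = sigma (Suc a) (tau1 w)"
proof -
  have sc: "scond (Suc a) (map Suc w) = scond a w" using ev_tau1[of w] by (simp add: scond_def tau1_def)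
  show ?thesis
    by (cases "scond a w") (auto simp: sigma_alt sc tau1_def map_fill_sub[of "Pa (Suc a)" Suc "Pa a"] Pa_Suc filter_map_Suc sig3_Suc)
qed


lemma f1z_fill_sub: "\<not> P 0 \<Longrightarrow> \<not> P 1 \<Longrightarrow> 1 \<notin> set s \<Longrightarrow>
  first_one_to_zero (fill_sub P w s) = fill_sub P (first_one_to_zero w) s"
proof (induction w arbitrary: s)
  case Nil then show ?case by simp
next
  case (Cons x w) then show ?case by (cases s) auto
qed

lemma filter_f1z: "\<not> P 0 \<Longrightarrow> \<not> P 1 \<Longrightarrow> filter P (first_one_to_zero w) = filter P w"
  by (induction w) auto

lemma count_f1z: "x \<noteq> 0 \<Longrightarrow> x \<noteq> 1 \<Longrightarrow> count_list (first_one_to_zero w) x = count_list w x"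
  by (induction w) auto

lemma count_f1z0: "1 \<in> set w \<Longrightarrow> count_list (first_one_to_zero w) 0 = Suc (count_list w 0)"
  by (induction w) auto

lemma count_f1z1: "count_list (first_one_to_zero w) 1 = count_list w 1 - 1"
  by (induction w) auto

lemma length_f1z[simp]: "length (first_one_to_zero w) = length w"
  by (induction w) auto

lemma length_r1101[simp]: "length (r1101 w) = length w"
  by (simp add: r1101_def)

lemma length_tau1[simp]: "length (tau1 w) = length w"
  by (simp add: tau1_def)

lemma r1101_sigma:
  assumes "2 \<le> a"
  shows "r1101 (sigma a w) = sigma a (r1101 w)"
proof -
  have e1: "ev (sigma a w) 1 = ev w 1" using assms by (simp add: sigma_ev_other)
  have sc: "scond a (first_one_to_zero w) = scond a w"
    using assms by (simp add: scond_def ev_def count_f1z)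
  have fa: "filter (Pa a) (first_one_to_zero w) = filter (Pa a) w"
    using assms by (intro filter_f1z) (auto simp: Pa_def)
  show ?thesis
  proof (cases "scond a w")
    case True
    have "1 \<notin> set (sig3 a (filter (Pa a) w))" using sig3_props(2)[OF True] assms by (auto simp: Pa_def)
    then show ?thesis using True assms e1 sc fa
      by (auto simp: r1101_def sigma_alt f1z_fill_sub Pa_def)
  next
    case False
    then show ?thesis using e1 sc by (auto simp: r1101_def sigma_alt)
  qed
qed

lemma sigma_chain_0[simp]: "sigma_chain 0 w = w"
  by (simp add: sigma_chain_def)

lemma sigma_chain_Suc: "sigma_chain (Suc k) w = sigma_chain k (sigma (Suc k) w)"
  by (simp add: sigma_chain_def)

lemma length_sigma_chain[simp]: "length (sigma_chain k w) = length w"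
  by (induction k arbitrary: w) (auto simp: sigma_chain_Suc)

lemma sigma_chain_commute: "Suc k < a \<Longrightarrow> sigma_chain k (sigma a w) = sigma a (sigma_chain k w)"
proof (induction k arbitrary: w)
  case 0 then show ?case by simp
next
  case (Suc k)
  have "sigma_chain (Suc k) (sigma a w) = sigma_chain k (sigma (Suc k) (sigma a w))" by (simp add: sigma_chain_Suc)
  also have "\<dots> = sigma_chain k (sigma a (sigma (Suc k) w))" using Suc.prems by (simp add: sigma_commute)
  also have "\<dots> = sigma a (sigma_chain k (sigma (Suc k) w))" using Suc by simp
  finally show ?case by (simp add: sigma_chain_Suc)
qed

definition cf :: "nat list \<Rightarrow> nat \<Rightarrow> nat" where
  "cf cs i = (if 0 < i \<and> i \<le> length cs then cs ! (i - 1) else 0)"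

definition hasc :: "word \<Rightarrow> nat list \<Rightarrow> bool" where
  "hasc w cs \<longleftrightarrow> (\<forall>i. ev w i = cf cs i)"

definition valid :: "nat list \<Rightarrow> bool" where
  "valid cs \<longleftrightarrow> set cs \<subseteq> {1,2}"

definition nd :: "nat list \<Rightarrow> nat" where
  "nd cs = count_list cs 2"

lemma cf_swap_other:
  "i \<noteq> Suc (length xs) \<Longrightarrow> i \<noteq> Suc (Suc (length xs)) \<Longrightarrow> cf (xs @ p # q # ys) i = cf (xs @ q # p # ys) i"
  by (auto simp: cf_def nth_append nth_Cons split: nat.splits)

lemma cf_at: "cf (xs @ p # q # ys) (Suc (length xs)) = p" "cf (xs @ p # q # ys) (Suc (Suc (length xs))) = q"
  by (auto simp: cf_def nth_append)

lemma hasc_sigma: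
  assumes "hasc w (xs @ p # q # ys)" "(p, q) \<in> {(1,2),(2,1)}" "a = Suc (length xs)"
  shows "scond a w" "hasc (sigma a w) (xs @ q # p # ys)"
proof -
  have ea: "ev w a = p" "ev w (Suc a) = q" using assms(1,3) cf_at[of xs p q ys] by (auto simp: hasc_def)
  then show sc: "scond a w" using assms(2) by (simp add: scond_def)
  show "hasc (sigma a w) (xs @ q # p # ys)"
    unfolding hasc_def
  proof
    fix i
    show "ev (sigma a w) i = cf (xs @ q # p # ys) i"
    proof (cases "i = a \<or> i = Suc a")
      case True
      then show ?thesis using sigma_ev[OF sc, of i] ea assms(3) cf_at[of xs q p ys] by auto
    next
      case False
      then have "ev (sigma a w) i = ev w i" using sigma_ev[OF sc, of i] by simp
      also have "\<dots> = cf (xs @ p # q # ys) i" using assms(1) by (simp add: hasc_def)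
      also have "\<dots> = cf (xs @ q # p # ys) i" using False assms(3) by (intro cf_swap_other) auto
      finally show ?thesis .
    qed
  qed
qed

lemma hasc_chain: "hasc w (replicate j 1 @ 2 # rest) \<Longrightarrow> hasc (sigma_chain j w) (2 # replicate j 1 @ rest)"
proof (induction j arbitrary: w rest)
  case 0 then show ?case by simp
next
  case (Suc j)
  have "hasc w (replicate j 1 @ 1 # 2 # rest)" using Suc.prems by (simp add: replicate_append_same[symmetric])
  then have "hasc (sigma (Suc j) w) (replicate j 1 @ 2 # 1 # rest)"
    by (rule hasc_sigma(2)) auto
  then have "hasc (sigma_chain j (sigma (Suc j) w)) (2 # replicate j 1 @ 1 # rest)"
    using Suc.IH by simp
  then show ?case by (simp add: sigma_chain_Suc replicate_append_same[symmetric])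
qed

lemma hasc_r_tau:
  assumes "hasc w (2 # rest)"
  shows "hasc (tau1 (r1101 w)) (1 # 1 # rest)"
proof -
  have e1: "ev w 1 = 2" "ev w 0 = 0" using assms by (auto simp: hasc_def cf_def)
  then have "1 \<in> set w" using count_list_0_iff[of w 1] by (simp add: ev_def)
  have r: "r1101 w = first_one_to_zero w" using e1 by (simp add: r1101_def)
  show ?thesis unfolding hasc_def
  proof
    fix i
    show "ev (tau1 (r1101 w)) i = cf (1 # 1 # rest) i"
    proof (cases i)
      case 0 then show ?thesis by (simp add: ev_tau1 cf_def)
    next
      case (Suc x)
      then have ex: "ev (tau1 (r1101 w)) i = count_list (first_one_to_zero w) x"
        using ev_tau1(1)[of "first_one_to_zero w" x] by (simp add: r ev_def)
      show ?thesis
      proof (cases "x = 0 \<or> x = 1")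
        case True
        then show ?thesis using Suc e1 \<open>1 \<in> set w\<close> ex count_f1z1[of w]
          by (auto simp: cf_def ev_def count_f1z0 count_f1z1)
      next
        case False
        then have "ev w x = cf (2 # rest) x" using assms by (simp add: hasc_def)
        then show ?thesis using Suc False ex by (auto simp: ev_def count_f1z cf_def)
      qed
    qed
  qed
qed

fun dc :: "nat list \<Rightarrow> nat list" where
  "dc [] = []"
| "dc (x # xs) = (if x = 2 then 1 # 1 # xs else 1 # dc xs)"

definition Dop :: "word \<Rightarrow> word" where
  "Dop w = tau1 (r1101 (sigma_chain ((LEAST i. ev w i = 2) - 1) w))"

lemma length_Dop[simp]: "length (Dop w) = length w"
  by (simp add: Dop_def)

lemma valid_split:
  assumes "valid cs" "2 \<in> set cs"
  obtains j rest where "cs = replicate j 1 @ 2 # rest"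
proof -
  obtain xs rest where cs: "cs = xs @ 2 # rest" "2 \<notin> set xs" using split_list_first[OF assms(2)] by blast
  then have "\<forall>y\<in>set xs. y = 1" using assms(1) by (auto simp: valid_def)
  then have "replicate (length xs) 1 = xs" by (rule replicate_length_same)
  then show ?thesis using that[of "length xs" rest] cs by simp
qed

lemma dc_rep: "dc (replicate j 1 @ 2 # rest) = replicate (Suc (Suc j)) 1 @ rest"
  by (induction j) auto

lemma least_ev: "hasc w (replicate j 1 @ 2 # rest) \<Longrightarrow> (LEAST i. ev w i = 2) = Suc j"
proof (rule Least_equality)
  assume h: "hasc w (replicate j 1 @ 2 # rest)"
  show "ev w (Suc j) = 2" using h by (simp add: hasc_def cf_def nth_append)
  fix y assume y2: "ev w y = 2"
  show "Suc j \<le> y"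
  proof (rule ccontr)
    assume "\<not> Suc j \<le> y"
    then have yl: "y < Suc j" by simp
    have e: "ev w y = cf (replicate j 1 @ 2 # rest) y" using h by (simp add: hasc_def)
    show False
    proof (cases y)
      case 0 then show ?thesis using e y2 by (simp add: cf_def)
    next
      case (Suc z)
      then have "z < j" using yl by simp
      then have "(replicate j 1 @ 2 # rest) ! z = 1" by (simp add: nth_append)
      then show ?thesis using e y2 Suc \<open>z < j\<close> by (simp add: cf_def)
    qed
  qed
qed

lemma Dop_rep: "hasc w (replicate j 1 @ 2 # rest) \<Longrightarrow> Dop w = tau1 (r1101 (sigma_chain j w))"
  by (simp add: Dop_def least_ev)

lemma hasc_Dop: "valid cs \<Longrightarrow> 2 \<in> set cs \<Longrightarrow> hasc w cs \<Longrightarrow> hasc (Dop w) (dc cs)"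
proof -
  assume v: "valid cs" "2 \<in> set cs" "hasc w cs"
  obtain j rest where cs: "cs = replicate j 1 @ 2 # rest" using valid_split v by blast
  have "hasc (sigma_chain j w) (2 # replicate j 1 @ rest)" using v cs hasc_chain by simp
  then have "hasc (tau1 (r1101 (sigma_chain j w))) (1 # 1 # replicate j 1 @ rest)" by (rule hasc_r_tau)
  moreover have "dc cs = 1 # 1 # replicate j 1 @ rest" unfolding cs dc_rep by simp
  ultimately show ?thesis using v cs by (simp add: Dop_rep)
qed

lemma valid_dc: "valid cs \<Longrightarrow> valid (dc cs)"
  by (induction cs) (auto simp: valid_def)

lemma length_dc: "2 \<in> set cs \<Longrightarrow> length (dc cs) = Suc (length cs)"
  by (induction cs) auto

lemma nd_dc: "2 \<in> set cs \<Longrightarrow> valid cs \<Longrightarrow> nd (dc cs) = nd cs - 1"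
  by (induction cs) (auto simp: nd_def valid_def count_list_0_iff)

lemma dc_append: "2 \<in> set xs \<Longrightarrow> dc (xs @ ys) = dc xs @ ys"
  by (induction xs) auto

lemma distinct_count: "distinct w \<longleftrightarrow> (\<forall>x. count_list w x \<le> 1)"
proof (induction w)
  case Nil then show ?case by simp
next
  case (Cons a w)
  show ?case
  proof
    assume "distinct (a # w)" then show "\<forall>x. count_list (a # w) x \<le> 1"
      using Cons by (auto simp: count_list_0_iff)
  next
    assume h: "\<forall>x. count_list (a # w) x \<le> 1"
    have "count_list (a # w) a \<le> 1" using h by blast
    then have "count_list w a = 0" by simp
    moreover have "\<forall>x. count_list w x \<le> 1"
    proof
      fix x show "count_list w x \<le> 1" using spec[OF h, of x] by (cases "x = a") auto
    qed
    ultimately show "distinct (a # w)" using Cons by (simp add: count_list_0_iff)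
  qed
qed

lemma distinct_hasc: "hasc w cs \<Longrightarrow> valid cs \<Longrightarrow> distinct w \<longleftrightarrow> 2 \<notin> set cs"
proof -
  assume h: "hasc w cs" "valid cs"
  have "(\<forall>x. count_list w x \<le> 1) \<longleftrightarrow> (\<forall>x. cf cs x \<le> 1)" using h by (simp add: hasc_def ev_def)
  also have "\<dots> \<longleftrightarrow> 2 \<notin> set cs"
  proof
    assume a: "\<forall>x. cf cs x \<le> 1"
    show "2 \<notin> set cs"
    proof
      assume "2 \<in> set cs"
      then obtain k where k: "k < length cs" "cs ! k = 2" by (auto simp: in_set_conv_nth)
      then have "cf cs (Suc k) = 2" by (simp add: cf_def)
      then show False using a by (metis Suc_1 n_not_Suc_n le_antisym le_SucI le_refl)
    qed
  next
    assume n2: "2 \<notin> set cs"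
    show "\<forall>x. cf cs x \<le> 1"
    proof
      fix x
      show "cf cs x \<le> 1"
      proof (cases "0 < x \<and> x \<le> length cs")
        case True
        then have "cs ! (x - 1) \<in> set cs" by (intro nth_mem) arith
        then have "cs ! (x - 1) \<in> {1,2}" "cs ! (x - 1) \<noteq> 2" using h(2) n2 by (auto simp: valid_def)
        then show ?thesis using True by (auto simp: cf_def)
      qed (auto simp: cf_def)
    qed
  qed
  finally show ?thesis by (simp add: distinct_count)
qed

lemma nd_zero: "nd cs = 0 \<longleftrightarrow> 2 \<notin> set cs" by (simp add: nd_def count_list_0_iff)

lemma step12: "valid cs \<Longrightarrow> 2 \<in> set cs \<Longrightarrow> hasc w cs \<Longrightarrow> (step1 \<circ> step2) (sh, w) = (sh, Dop w)"
proof -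
  assume v: "valid cs" "2 \<in> set cs" "hasc w cs"
  obtain j rest where cs: "cs = replicate j 1 @ 2 # rest" using valid_split v by blast
  have h: "hasc (sigma_chain j w) (2 # replicate j 1 @ rest)" using v cs hasc_chain by simp
  then have "ev (sigma_chain j w) 1 = 2" by (simp add: hasc_def cf_def)
  then show ?thesis using v cs
    by (simp add: step1_def step2_def on_tab_def least_ev Dop_rep)
qed

lemma while_VS: "valid cs \<Longrightarrow> hasc w cs \<Longrightarrow>
  while_option (\<lambda>T. \<not> distinct (snd T)) (step1 \<circ> step2) (sh, w) = Some (sh, (Dop ^^ nd cs) w)"
proof (induction "nd cs" arbitrary: cs w)
  case 0
  then show ?case using distinct_hasc[of w cs] nd_zero[of cs] by (subst while_option_unfold) simp
next
  case (Suc k)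
  then have two: "2 \<in> set cs" using nd_zero by force
  have "nd (dc cs) = k" using Suc two nd_dc by force
  then have "while_option (\<lambda>T. \<not> distinct (snd T)) (step1 \<circ> step2) (sh, Dop w) = Some (sh, (Dop ^^ k) (Dop w))"
    using Suc.hyps(1) Suc.prems valid_dc hasc_Dop two by blast
  moreover have fp: "(Dop ^^ nd cs) w = (Dop ^^ k) (Dop w)"
    by (simp only: Suc.hyps(2)[symmetric] funpow_Suc_right o_apply)
  ultimately show ?case using Suc.prems Suc.hyps(2) two distinct_hasc[of w cs] step12[of cs w sh]
    by (subst while_option_unfold) (simp add: funpow_Suc_right del: funpow.simps)
qed

lemma VS_eq: "valid cs \<Longrightarrow> hasc w cs \<Longrightarrow> VS (sh, w) = (sh, (Dop ^^ nd cs) w)"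
proof -
  assume v: "valid cs" "hasc w cs"
  show ?thesis
  proof (cases "ev w 1 = 2")
    case True
    then obtain rest where cs: "cs = 2 # rest" using v
      by (cases cs) (auto simp: hasc_def cf_def)
    have "Dop w = tau1 (r1101 w)" using v cs Dop_rep[of w 0 rest] by simp
    then have s1: "step1 (sh, w) = (sh, Dop w)" using True by (simp add: step1_def on_tab_def)
    have "nd (dc cs) = nd cs - 1" "nd cs \<noteq> 0" using v cs by (auto simp: nd_def)
    then obtain k where k: "nd cs = Suc k" "nd (dc cs) = k" by (cases "nd cs") auto
    have "while_option (\<lambda>T. \<not> distinct (snd T)) (step1 \<circ> step2) (sh, Dop w) = Some (sh, (Dop ^^ k) (Dop w))"
      using while_VS[OF valid_dc hasc_Dop, of cs w sh] v cs k by simp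
    then show ?thesis using s1 k by (simp add: VS_def funpow_Suc_right del: funpow.simps)
  next
    case False
    then show ?thesis using while_VS[OF v] by (simp add: VS_def step1_def)
  qed
qed


lemma Dop_sigma_low:
  assumes v: "valid (xs @ 1 # 2 # ys)" and two: "2 \<in> set xs" and h: "hasc w (xs @ 1 # 2 # ys)"
    and a: "a = Suc (length xs)"
  shows "Dop (sigma a w) = sigma (Suc a) (Dop w)"
proof -
  have vx: "valid xs" using v by (simp add: valid_def)
  obtain j rest where xs: "xs = replicate j 1 @ 2 # rest" using valid_split[OF vx two] by blast
  have hs: "hasc (sigma a w) (xs @ 2 # 1 # ys)" using hasc_sigma(2)[OF h _ a] by simp
  have d1: "Dop w = tau1 (r1101 (sigma_chain j w))"
    using h xs by (intro Dop_rep[of w j "rest @ 1 # 2 # ys"]) simp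
  have d2: "Dop (sigma a w) = tau1 (r1101 (sigma_chain j (sigma a w)))"
    using hs xs by (intro Dop_rep[of _ j "rest @ 2 # 1 # ys"]) simp
  have ja: "Suc j < a" "2 \<le> a" using a xs by auto
  show ?thesis using d1 d2 ja
    by (simp add: sigma_chain_commute r1101_sigma tau1_sigma)
qed

lemma nd_app: "nd (xs @ ys) = nd xs + nd ys" by (simp add: nd_def)

lemma L1:
  assumes "valid (xs @ 1 # 2 # ys)" "hasc w (xs @ 1 # 2 # ys)" "a = Suc (length xs)"
  shows "(Dop ^^ nd (xs @ 1 # 2 # ys)) (sigma a w) = (Dop ^^ nd (xs @ 1 # 2 # ys)) w"
  using assms
proof (induction "count_list xs 2" arbitrary: xs w a rule: less_induct)
  case less
  let ?cs = "xs @ 1 # 2 # ys"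
  have two: "2 \<in> set ?cs" by simp
  have "nd ?cs \<noteq> 0" using two nd_zero by blast
  then obtain k where k: "nd ?cs = Suc k" using not0_implies_Suc by blast
  have fp: "\<And>u. (Dop ^^ nd ?cs) u = (Dop ^^ k) (Dop u)"
    by (simp only: k funpow_Suc_right o_apply)
  show ?case
  proof (cases "2 \<in> set xs")
    case True
    have e1: "Dop (sigma a w) = sigma (Suc a) (Dop w)" using Dop_sigma_low less.prems True by blast
    have hd: "hasc (Dop w) (dc xs @ 1 # 2 # ys)"
      using hasc_Dop[OF less.prems(1) two less.prems(2)] dc_append[OF True] by simp
    have vd: "valid (dc xs @ 1 # 2 # ys)"
      using valid_dc[OF less.prems(1)] dc_append[OF True] by simp
    have vx: "valid xs" using less.prems(1) by (simp add: valid_def)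
    have ndd: "nd (dc xs) = nd xs - 1" using nd_dc[OF True vx] .
    have "nd xs > 0" using True count_list_0_iff[of xs 2] by (simp add: nd_def)
    then have lt: "count_list (dc xs) 2 < count_list xs 2" using ndd by (simp add: nd_def)
    have nk: "nd (dc xs @ 1 # 2 # ys) = k" using k ndd \<open>nd xs > 0\<close> by (simp add: nd_app)
    have "Suc a = Suc (length (dc xs))" using length_dc[OF True] less.prems(3) by simp
    then have "(Dop ^^ k) (sigma (Suc a) (Dop w)) = (Dop ^^ k) (Dop w)"
      using less.hyps[OF lt vd hd] nk by simp
    then show ?thesis using fp e1 by simp
  next
    case False
    have vx: "valid xs" using less.prems(1) by (simp add: valid_def)
    have "\<forall>y\<in>set xs. y = 1" using vx False by (auto simp: valid_def)
    then have "replicate (length xs) 1 = xs" by (rule replicate_length_same)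
    then obtain j where xs: "xs = replicate j 1" by metis
    let ?j = j
    have "xs @ 1 # 2 # ys = replicate (Suc j) 1 @ 2 # ys"
      unfolding xs by (simp add: replicate_append_same[symmetric])
    then have h1: "hasc w (replicate (Suc ?j) 1 @ 2 # ys)" using less.prems(2) by metis
    have hs: "hasc (sigma a w) (xs @ 2 # 1 # ys)" using hasc_sigma(2)[OF less.prems(2) _ less.prems(3)] by simp
    then have h2: "hasc (sigma a w) (replicate ?j 1 @ 2 # 1 # ys)" using xs by simp
    have "Dop w = tau1 (r1101 (sigma_chain (Suc ?j) w))" using Dop_rep[OF h1] .
    moreover have "Dop (sigma a w) = tau1 (r1101 (sigma_chain ?j (sigma a w)))" using Dop_rep[OF h2] .
    ultimately have "Dop (sigma a w) = Dop w" using less.prems(3) xs by (simp add: sigma_chain_Suc)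
    then show ?thesis using fp by simp
  qed
qed

lemma VS_sigma:
  assumes v: "valid (xs @ p # q # ys)" and pq: "(p, q) \<in> {(1,2),(2,1)}"
    and h: "hasc w (xs @ p # q # ys)" and a: "a = Suc (length xs)"
  shows "VS (sh, sigma a w) = VS (sh, w)"
proof -
  have case12: "VS (sh, sigma a u) = VS (sh, u)" if vu: "valid (xs @ 1 # 2 # ys)" and hu: "hasc u (xs @ 1 # 2 # ys)" for u
  proof -
    have hs: "hasc (sigma a u) (xs @ 2 # 1 # ys)" using hasc_sigma(2)[OF hu _ a] by simp
    have vs: "valid (xs @ 2 # 1 # ys)" using vu by (auto simp: valid_def)
    have "nd (xs @ 2 # 1 # ys) = nd (xs @ 1 # 2 # ys)" by (simp add: nd_def)
    then show ?thesis using VS_eq[OF vs hs] VS_eq[OF vu hu] L1[OF vu hu a] by simp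
  qed
  show ?thesis
  proof (cases "(p,q) = (1,2)")
    case True then show ?thesis using case12 v h by simp
  next
    case False
    then have pq2: "p = 2" "q = 1" using pq by auto
    let ?u = "sigma a w"
    have hu: "hasc ?u (xs @ 1 # 2 # ys)" using hasc_sigma(2)[OF h _ a] pq2 by simp
    have vu: "valid (xs @ 1 # 2 # ys)" using v pq2 by (auto simp: valid_def)
    have sc: "scond a w" using hasc_sigma(1)[OF h _ a] pq2 by simp
    have "sigma a ?u = w" using sigma_invol[OF sc] .
    then show ?thesis using case12[OF vu hu] by simp
  qed
qed


definition tab_of :: "nat list list \<Rightarrow> tableau" where
  "tab_of R = (map length R, concat (rev R))"

lemma split_by_concat: "split_by (map length Rs) (concat Rs) = Rs"
  by (induction Rs) auto

lemma rows_tab_of[simp]: "rows (tab_of R) = R"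
  unfolding rows_def tab_of_def by (simp add: rev_map split_by_concat)

lemma split_by_len: "length w = sum_list ls \<Longrightarrow> map length (split_by ls w) = ls \<and> concat (split_by ls w) = w"
proof (induction ls arbitrary: w)
  case Nil then show ?case by simp
next
  case (Cons l ls)
  then show ?case by (auto simp: min_def)
qed

lemma tab_of_rows: "length (snd T) = sum_list (fst T) \<Longrightarrow> tab_of (rows T) = T"
proof -
  assume a: "length (snd T) = sum_list (fst T)"
  have "length (snd T) = sum_list (rev (fst T))" using a by (simp add: sum_list_rev)
  from split_by_len[OF this] show ?thesis
    unfolding rows_def tab_of_def by (simp add: rev_map[symmetric])
qed

definition ssR :: "nat list list \<Rightarrow> bool" where
  "ssR R \<longleftrightarrow> is_partition (map length R) \<and> (\<forall>i<length R. sorted (R!i)) \<and>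
     (\<forall>i. Suc i < length R \<longrightarrow> (\<forall>j<length (R ! Suc i). R!i!j < R!Suc i!j))"

lemma length_concat_rev: "length (concat (rev R)) = sum_list (map length R)"
  by (induction R) auto

lemma semistandard_tab_of: "semistandard (tab_of R) \<longleftrightarrow> ssR R"
  unfolding semistandard_def ssR_def entry_def rows_tab_of
  unfolding tab_of_def by (auto simp: length_concat_rev sorted_iff_nth_Suc length_concat rev_map[symmetric] sum_list_rev)

lemma semistandard_rows: "semistandard T \<Longrightarrow> T = tab_of (rows T) \<and> ssR (rows T)"
proof -
  assume s: "semistandard T"
  then have "tab_of (rows T) = T" by (intro tab_of_rows) (simp add: semistandard_def)
  then show ?thesis using s semistandard_tab_of by metis
qed

definition off :: "nat list list \<Rightarrow> nat \<Rightarrow> nat" where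
  "off R i = length (concat (drop (Suc i) R))"

lemma off_Cons_Suc[simp]: "off (r # R) (Suc i) = off R i"
  by (simp add: off_def)

lemma off_Cons_0: "off (r # R) 0 = length (concat (rev R))"
  by (simp add: off_def length_concat_rev length_concat rev_map[symmetric] sum_list_rev)

lemma pos_nth: "i < length R \<Longrightarrow> j < length (R!i) \<Longrightarrow>
   off R i + j < length (concat (rev R)) \<and> concat (rev R) ! (off R i + j) = R!i!j"
proof (induction R arbitrary: i)
  case Nil then show ?case by simp
next
  case (Cons r R)
  show ?case
  proof (cases i)
    case 0 then show ?thesis using Cons.prems by (simp add: off_Cons_0 nth_append)
  next
    case (Suc k)
    then have "off R k + j < length (concat (rev R)) \<and> concat (rev R) ! (off R k + j) = R!k!j"
      using Cons by simp
    then show ?thesis using Suc by (simp add: nth_append)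
  qed
qed

lemma pos_surj: "q < length (concat (rev R)) \<Longrightarrow> \<exists>i j. i < length R \<and> j < length (R!i) \<and> q = off R i + j"
proof (induction R)
  case Nil then show ?case by simp
next
  case (Cons r R)
  show ?case
  proof (cases "q < length (concat (rev R))")
    case True
    then obtain i j where "i < length R" "j < length (R!i)" "q = off R i + j" using Cons.IH by blast
    then show ?thesis by (intro exI[of _ "Suc i"] exI[of _ j]) simp
  next
    case False
    then show ?thesis using Cons.prems
      by (intro exI[of _ 0] exI[of _ "q - length (concat (rev R))"]) (auto simp: off_Cons_0)
  qed
qed

lemma off_mono: "i' < i \<Longrightarrow> i < length R \<Longrightarrow> off R i + length (R!i) \<le> off R i'"
proof (induction R arbitrary: i i')
  case Nil then show ?case by simp
next
  case (Cons r R)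
  then obtain k where k: "i = Suc k" by (cases i) auto
  show ?case
  proof (cases i')
    case 0
    have "off R k + length (R!k) \<le> length (concat R)"
    proof -
      have "concat R = concat (take k R) @ R!k @ concat (drop (Suc k) R)"
        using Cons.prems k by (metis Cons_nth_drop_Suc append_take_drop_id concat.simps(2) concat_append length_Cons not_less_eq)
      then show ?thesis by (simp add: off_def)
    qed
    then show ?thesis using 0 k by (simp add: off_Cons_0 length_concat_rev length_concat rev_map[symmetric] sum_list_rev)
  next
    case (Suc k')
    then show ?thesis using Cons k by simp
  qed
qed

lemma pos_less_iff:
  assumes "i < length R" "j < length (R!i)" "i' < length R" "j' < length (R!i')"
  shows "off R i + j < off R i' + j' \<longleftrightarrow> (i' < i \<or> (i = i' \<and> j < j'))"
proof -
  have "off R i + j < off R i' + j'" if "i' < i" using off_mono[OF that assms(1)] assms by linarith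
  moreover have "off R i' + j' < off R i + j" if "i < i'" using off_mono[OF that assms(3)] assms by linarith
  ultimately show ?thesis by (cases "i < i'"; cases "i' < i") auto
qed

lemma concat_rev_update:
  "i < length R \<Longrightarrow> j < length (R!i) \<Longrightarrow>
   concat (rev (R[i := (R!i)[j := v]])) = (concat (rev R))[off R i + j := v]"
proof (induction R arbitrary: i)
  case Nil then show ?case by simp
next
  case (Cons r R)
  show ?case
  proof (cases i)
    case 0 then show ?thesis using Cons.prems by (simp add: off_Cons_0 list_update_append)
  next
    case (Suc k)
    then have "off R k + j < length (concat (rev R))" using pos_nth Cons.prems by simp
    then show ?thesis using Cons Suc by (simp add: list_update_append)
  qed
qed


lemma part_len: "is_partition (map length R) \<Longrightarrow> i \<le> i' \<Longrightarrow> i' < length R \<Longrightarrow> length (R!i') \<le> length (R!i)"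
  unfolding is_partition_def
  by (cases "i = i'") (auto dest: sorted_wrt_nth_less[where i=i and j=i'])

lemma flip_up:
  assumes s: "ssR R" and i: "i < length R" and j: "j < length (R!i)" and v: "R!i!j = a"
    and r: "Suc j < length (R!i) \<Longrightarrow> R!i!Suc j \<noteq> a"
    and u: "Suc i < length R \<Longrightarrow> j < length (R!Suc i) \<Longrightarrow> R!Suc i!j \<noteq> Suc a"
  shows "ssR (R[i := (R!i)[j := Suc a]])"
proof -
  let ?R = "R[i := (R!i)[j := Suc a]]"
  have ml: "map length ?R = map length R" by (rule nth_equalityI) (auto simp: nth_list_update i)
  have srt: "\<forall>k<length R. sorted (R!k)" and col: "\<forall>k. Suc k < length R \<longrightarrow> (\<forall>jj<length (R ! Suc k). R!k!jj < R!Suc k!jj)"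
    and p: "is_partition (map length R)" using s by (auto simp: ssR_def)
  have "sorted ((R!i)[j := Suc a])"
    unfolding sorted_iff_nth_Suc
  proof (intro allI impI)
    fix m assume m: "Suc m < length ((R!i)[j := Suc a])"
    have "R!i!m \<le> R!i!Suc m" using srt i m by (auto simp: sorted_iff_nth_Suc)
    moreover have "m = j \<Longrightarrow> R!i!Suc m \<noteq> a" using r m by auto
    ultimately show "(R!i)[j := Suc a] ! m \<le> (R!i)[j := Suc a] ! Suc m"
      using v m by (cases "m = j"; cases "Suc m = j") (auto simp: nth_list_update)
  qed
  then have s2: "\<forall>k<length ?R. sorted (?R!k)" using srt i by (auto simp: nth_list_update)
  have c2: "\<forall>k. Suc k < length ?R \<longrightarrow> (\<forall>jj<length (?R ! Suc k). ?R!k!jj < ?R!Suc k!jj)"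
  proof (intro allI impI)
    fix k jj assume k: "Suc k < length ?R" and jj: "jj < length (?R ! Suc k)"
    have jj': "jj < length (R ! Suc k)" using jj k by (cases "Suc k = i") auto
    have c: "R!k!jj < R!Suc k!jj" using col k jj' by simp
    have "k = i \<Longrightarrow> jj = j \<Longrightarrow> R!Suc k!jj \<noteq> Suc a" using u k jj' by auto
    then show "?R!k!jj < ?R!Suc k!jj" using c v i j k jj'
      by (cases "k = i"; cases "Suc k = i"; cases "jj = j") (auto simp: nth_list_update)
  qed
  show ?thesis using ml p s2 c2 by (simp add: ssR_def)
qed

lemma flip_down:
  assumes s: "ssR R" and i: "i < length R" and j: "j < length (R!i)" and v: "R!i!j = Suc a"
    and l: "0 < j \<Longrightarrow> R!i!(j - 1) \<noteq> Suc a"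
    and d: "0 < i \<Longrightarrow> R!(i - 1)!j \<noteq> a"
  shows "ssR (R[i := (R!i)[j := a]])"
proof -
  let ?R = "R[i := (R!i)[j := a]]"
  have ml: "map length ?R = map length R" by (rule nth_equalityI) (auto simp: nth_list_update i)
  have srt: "\<forall>k<length R. sorted (R!k)" and col: "\<forall>k. Suc k < length R \<longrightarrow> (\<forall>jj<length (R ! Suc k). R!k!jj < R!Suc k!jj)"
    and p: "is_partition (map length R)" using s by (auto simp: ssR_def)
  have "sorted ((R!i)[j := a])"
    unfolding sorted_iff_nth_Suc
  proof (intro allI impI)
    fix m assume m: "Suc m < length ((R!i)[j := a])"
    have "R!i!m \<le> R!i!Suc m" using srt i m by (auto simp: sorted_iff_nth_Suc)
    moreover have "Suc m = j \<Longrightarrow> R!i!m \<noteq> Suc a" using l m by auto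
    ultimately show "(R!i)[j := a] ! m \<le> (R!i)[j := a] ! Suc m"
      using v m by (cases "m = j"; cases "Suc m = j") (auto simp: nth_list_update)
  qed
  then have s2: "\<forall>k<length ?R. sorted (?R!k)" using srt i by (auto simp: nth_list_update)
  have c2: "\<forall>k. Suc k < length ?R \<longrightarrow> (\<forall>jj<length (?R ! Suc k). ?R!k!jj < ?R!Suc k!jj)"
  proof (intro allI impI)
    fix k jj assume k: "Suc k < length ?R" and jj: "jj < length (?R ! Suc k)"
    have jj': "jj < length (R ! Suc k)" using jj k by (cases "Suc k = i") auto
    have c: "R!k!jj < R!Suc k!jj" using col k jj' by simp
    have "Suc k = i \<Longrightarrow> jj = j \<Longrightarrow> R!k!jj \<noteq> a" using d k jj' by auto
    then show "?R!k!jj < ?R!Suc k!jj" using c v i j k jj'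
      by (cases "k = i"; cases "Suc k = i"; cases "jj = j") (auto simp: nth_list_update)
  qed
  show ?thesis using ml p s2 c2 by (simp add: ssR_def)
qed

definition rk :: "('a \<Rightarrow> bool) \<Rightarrow> 'a list \<Rightarrow> nat \<Rightarrow> nat" where
  "rk P w p = length (filter P (take p w))"

lemma rk_Suc: "p < length w \<Longrightarrow> rk P w (Suc p) = rk P w p + (if P (w!p) then 1 else 0)"
  by (simp add: rk_def take_Suc_conv_app_nth)

lemma rk_mono: "p \<le> p' \<Longrightarrow> rk P w p \<le> rk P w p'"
proof -
  assume "p \<le> p'"
  then have "take p w = take p (take p' w)" by (simp add: min_def)
  then have "filter P (take p w) = filter P (take p (take p' w))" by simp
  moreover have "length (filter P (take p (take p' w))) \<le> length (filter P (take p' w))"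
    by (metis append_take_drop_id filter_append le_add1 length_append)
  ultimately show ?thesis by (simp add: rk_def)
qed

lemma rk_le: "rk P w p \<le> length (filter P w)"
  by (metis append_take_drop_id filter_append le_add1 length_append rk_def)

lemma rk_less: "p < p' \<Longrightarrow> p < length w \<Longrightarrow> P (w!p) \<Longrightarrow> rk P w p < rk P w p'"
  using rk_Suc[of p w P] rk_mono[of "Suc p" p' P w] by simp

lemma rk_bound: "p < length w \<Longrightarrow> P (w!p) \<Longrightarrow> rk P w p < length (filter P w)"
  using rk_less[of p "length w" w P] rk_le[of P w "length w"] by (simp add: rk_def)

lemma rk_val: "p < length (w::nat list) \<Longrightarrow> P (w!p) \<Longrightarrow> filter P w ! rk P w p = w!p"
  using fill_sub_nth[of "filter P w" P w p] fill_sub_self[of P w] by (simp add: rk_def)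

lemma rk_exists: "k < length (filter P w) \<Longrightarrow> \<exists>p<length w. P (w!p) \<and> rk P w p = k"
proof (induction w arbitrary: k)
  case Nil then show ?case by simp
next
  case (Cons x w)
  show ?case
  proof (cases "P x")
    case True
    show ?thesis
    proof (cases k)
      case 0 then show ?thesis using True by (intro exI[of _ 0]) (simp add: rk_def)
    next
      case (Suc k')
      then obtain p where "p < length w" "P (w!p)" "rk P w p = k'" using Cons True by auto
      then show ?thesis using True Suc by (intro exI[of _ "Suc p"]) (simp add: rk_def)
    qed
  next
    case False
    then obtain p where "p < length w" "P (w!p)" "rk P w p = k" using Cons by auto
    then show ?thesis using False by (intro exI[of _ "Suc p"]) (simp add: rk_def)
  qed
qed

lemma rk_inj: "p < length w \<Longrightarrow> p' < length w \<Longrightarrow> P (w!p) \<Longrightarrow> P (w!p') \<Longrightarrow> rk P w p = rk P w p' \<Longrightarrow> p = p'"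
  using rk_less[of p p' w P] rk_less[of p' p w P] by (cases "p < p'"; cases "p' < p") auto

lemma rk_order: "p < length w \<Longrightarrow> p' < length w \<Longrightarrow> P (w!p) \<Longrightarrow> P (w!p') \<Longrightarrow> rk P w p < rk P w p' \<Longrightarrow> p < p'"
  using rk_less[of p' p w P] by (cases "p < p'"; cases "p' < p") auto

lemma fill_sub_update:
  fixes w :: "nat list"
  assumes k: "k < length (filter P w)"
  shows "\<exists>q<length w. P (w!q) \<and> rk P w q = k \<and> fill_sub P w ((filter P w)[k := v]) = w[q := v]"
proof -
  obtain q where q: "q < length w" "P (w!q)" "rk P w q = k" using rk_exists[OF k] by blast
  have "fill_sub P w ((filter P w)[k := v]) = w[q := v]"
  proof (rule nth_equalityI)
    fix p assume p: "p < length (fill_sub P w ((filter P w)[k := v]))"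
    then have p': "p < length w" by simp
    show "fill_sub P w ((filter P w)[k := v]) ! p = w[q := v] ! p"
    proof (cases "P (w!p)")
      case True
      have "rk P w p < length (filter P w)" using rk_bound[of p w P, OF p' True] .
      moreover have "p \<noteq> q \<Longrightarrow> rk P w p \<noteq> k" using rk_inj[OF p' q(1) True q(2)] q(3) by auto
      ultimately show ?thesis using fill_sub_nth[of "(filter P w)[k := v]" P w p] p' True q rk_val[of p w P, OF p' True]
        rk_inj[OF p' q(1) True q(2)] by (auto simp: rk_def nth_list_update)
    next
      case False
      then have "p \<noteq> q" using q by auto
      then show ?thesis using fill_sub_nth[of "(filter P w)[k := v]" P w p] p' False by simp
    qed
  qed simp
  then show ?thesis using q by blast
qed


lemma cell_rk:
  assumes "i < length R" "j < length (R!i)" "P (R!i!j)"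
  shows "off R i + j < length (concat (rev R)) \<and> P (concat (rev R) ! (off R i + j)) \<and>
    rk P (concat (rev R)) (off R i + j) < length (filter P (concat (rev R))) \<and>
    filter P (concat (rev R)) ! rk P (concat (rev R)) (off R i + j) = R!i!j"
  using pos_nth[OF assms(1,2)] assms(3) rk_bound[of "off R i + j" "concat (rev R)" P]
    rk_val[of "off R i + j" "concat (rev R)" P] by simp

lemma cell_less:
  assumes "i < length R" "j < length (R!i)" "P (R!i!j)" "i' < length R" "j' < length (R!i')"
    "off R i + j < off R i' + j'"
  shows "rk P (concat (rev R)) (off R i + j) < rk P (concat (rev R)) (off R i' + j')"
proof -
  have h: "off R i + j < length (concat (rev R))" "P (concat (rev R) ! (off R i + j))"
    using cell_rk[where P=P, OF assms(1-3)] by simp_all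
  show ?thesis by (rule rk_less[where P=P, OF assms(6) h])
qed

lemma cell_less_rk:
  assumes "i < length R" "j < length (R!i)" "P (R!i!j)" "i' < length R" "j' < length (R!i')" "P (R!i'!j')"
    "rk P (concat (rev R)) (off R i + j) < rk P (concat (rev R)) (off R i' + j')"
  shows "off R i + j < off R i' + j'"
proof -
  have h: "off R i + j < length (concat (rev R))" "P (concat (rev R) ! (off R i + j))"
    using cell_rk[where P=P, OF assms(1-3)] by simp_all
  have h': "off R i' + j' < length (concat (rev R))" "P (concat (rev R) ! (off R i' + j'))"
    using cell_rk[where P=P, OF assms(4-6)] by simp_all
  show ?thesis by (rule rk_order[where P=P, OF h(1) h'(1) h(2) h'(2) assms(7)])
qed

lemma ssR_sorted: "ssR R \<Longrightarrow> i < length R \<Longrightarrow> j \<le> j' \<Longrightarrow> j' < length (R!i) \<Longrightarrow> R!i!j \<le> R!i!j'"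
  by (auto simp: ssR_def intro: sorted_nth_mono)

lemma ssR_col: "ssR R \<Longrightarrow> Suc i < length R \<Longrightarrow> j < length (R!Suc i) \<Longrightarrow> R!i!j < R!Suc i!j"
  by (auto simp: ssR_def)

lemma ssR_len: "ssR R \<Longrightarrow> i \<le> i' \<Longrightarrow> i' < length R \<Longrightarrow> length (R!i') \<le> length (R!i)"
  by (auto simp: ssR_def intro: part_len)

lemma L3_gen:
  assumes s: "ssR R" and w: "w = concat (rev R)" and sc: "scond a w"
    and k: "k < length (filter (Pa a) w)" and sg: "sig3 a (filter (Pa a) w) = (filter (Pa a) w)[k := v]"
    and fl: "\<And>i j. i < length R \<Longrightarrow> j < length (R!i) \<Longrightarrow> Pa a (R!i!j) \<Longrightarrow>
               rk (Pa a) w (off R i + j) = k \<Longrightarrow> ssR (R[i := (R!i)[j := v]])"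
  shows "\<exists>R'. sigma a w = concat (rev R') \<and> map length R' = map length R \<and> ssR R'"
proof -
  obtain q where q: "q < length w" "Pa a (w!q)" "rk (Pa a) w q = k" "fill_sub (Pa a) w ((filter (Pa a) w)[k := v]) = w[q := v]"
    using fill_sub_update[OF k] by blast
  have sw: "sigma a w = w[q := v]" using q(4) sc sg by (simp add: sigma_alt)
  obtain i j where ij: "i < length R" "j < length (R!i)" "q = off R i + j" using pos_surj q(1) w by blast
  have "w!q = R!i!j" using pos_nth[OF ij(1,2)] ij(3) w by simp
  then have "ssR (R[i := (R!i)[j := v]])" using fl[OF ij(1,2)] q ij(3) by simp
  moreover have "concat (rev (R[i := (R!i)[j := v]])) = w[q := v]" using concat_rev_update[OF ij(1,2)] ij(3) w by simp
  moreover have "map length (R[i := (R!i)[j := v]]) = map length R"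
    by (rule nth_equalityI) (auto simp: nth_list_update ij)
  ultimately show ?thesis using sw by (intro exI[of _ "R[i := (R!i)[j := v]]"]) simp
qed


lemma L3:
  assumes s: "ssR R" and sc: "scond a (concat (rev R))"
  shows "\<exists>R'. sigma a (concat (rev R)) = concat (rev R') \<and> map length R' = map length R \<and> ssR R'"
proof -
  define w where "w = concat (rev R)"
  define P where "P = Pa a"
  define u where "u = filter P w"
  define rr where "rr = (\<lambda>i j. rk P w (off R i + j))"
  have PL: "\<And>x. P x \<longleftrightarrow> x = a \<or> x = Suc a" by (simp add: P_def Pa_def)
  have cr: "\<And>i j. i < length R \<Longrightarrow> j < length (R!i) \<Longrightarrow> P (R!i!j) \<Longrightarrow> rr i j < length u \<and> u ! rr i j = R!i!j"
    using cell_rk unfolding rr_def u_def w_def by blast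
  have cl: "\<And>i j i' j'. i < length R \<Longrightarrow> j < length (R!i) \<Longrightarrow> P (R!i!j) \<Longrightarrow> i' < length R \<Longrightarrow> j' < length (R!i') \<Longrightarrow>
     off R i + j < off R i' + j' \<Longrightarrow> rr i j < rr i' j'"
    unfolding rr_def w_def by (rule cell_less)
  have clr: "\<And>i j i' j'. i < length R \<Longrightarrow> j < length (R!i) \<Longrightarrow> P (R!i!j) \<Longrightarrow> i' < length R \<Longrightarrow> j' < length (R!i') \<Longrightarrow>
     P (R!i'!j') \<Longrightarrow> rr i j < rr i' j' \<Longrightarrow> off R i + j < off R i' + j'"
    unfolding rr_def w_def by (rule cell_less_rk)
  have ex: "\<And>k. k < length u \<Longrightarrow> \<exists>i j. i < length R \<and> j < length (R!i) \<and> P (R!i!j) \<and> rr i j = k"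
  proof -
    fix k assume "k < length u"
    then obtain p where p: "p < length w" "P (w!p)" "rk P w p = k" using rk_exists unfolding u_def by blast
    then obtain i j where ij: "i < length R" "j < length (R!i)" "p = off R i + j" using pos_surj w_def by blast
    then have "w!p = R!i!j" using pos_nth[OF ij(1,2)] w_def by simp
    then show "\<exists>i j. i < length R \<and> j < length (R!i) \<and> P (R!i!j) \<and> rr i j = k"
      using ij p rr_def by auto
  qed
  have srt: "\<And>i j j'. i < length R \<Longrightarrow> j \<le> j' \<Longrightarrow> j' < length (R!i) \<Longrightarrow> R!i!j \<le> R!i!j'"
    using ssR_sorted[OF s] by blast
  have col: "\<And>i j. Suc i < length R \<Longrightarrow> j < length (R!Suc i) \<Longrightarrow> R!i!j < R!Suc i!j"
    using ssR_col[OF s] by blast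
  have len: "\<And>i i'. i \<le> i' \<Longrightarrow> i' < length R \<Longrightarrow> length (R!i') \<le> length (R!i)"
    using ssR_len[OF s] by blast
  have pl: "\<And>i j i' j'. i < length R \<Longrightarrow> j < length (R!i) \<Longrightarrow> i' < length R \<Longrightarrow> j' < length (R!i') \<Longrightarrow>
     off R i + j < off R i' + j' \<longleftrightarrow> (i' < i \<or> (i = i' \<and> j < j'))"
    by (rule pos_less_iff)
  have scw: "scond a w" using sc w_def by simp
  have ucases: "u \<in> {[a,Suc a,Suc a],[Suc a,a,Suc a],[Suc a,Suc a,a],[a,a,Suc a],[a,Suc a,a],[Suc a,a,a]}"
    using filter_Pa_cases[OF scw] u_def P_def by simp
  have gen: "\<And>k v. k < length u \<Longrightarrow> sig3 a u = u[k := v] \<Longrightarrow>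
      (\<And>i j. i < length R \<Longrightarrow> j < length (R!i) \<Longrightarrow> P (R!i!j) \<Longrightarrow> rr i j = k \<Longrightarrow> ssR (R[i := (R!i)[j := v]])) \<Longrightarrow>
      \<exists>R'. sigma a (concat (rev R)) = concat (rev R') \<and> map length R' = map length R \<and> ssR R'"
    unfolding u_def P_def rr_def w_def by (rule L3_gen[OF s refl sc]) auto
  from sig3_cases[OF ucases] show ?thesis
  proof (elim disjE conjE)
    assume u1: "u = [a,a,Suc a]" and "sig3 a u = [a,Suc a,Suc a]"
    then have "sig3 a u = u[1 := Suc a]" by simp
    then show ?thesis using u1
    proof (intro gen)
      fix i j assume i: "i < length R" and j: "j < length (R!i)" and Pij: "P (R!i!j)" and r: "rr i j = 1"
      have v: "R!i!j = a" using cr[OF i j Pij] r u1 by simp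
      show "ssR (R[i := (R!i)[j := Suc a]])"
      proof (rule flip_up[OF s i j v])
        assume j1: "Suc j < length (R!i)"
        show "R!i!Suc j \<noteq> a"
        proof
          assume e: "R!i!Suc j = a"
          then have pp: "P (R!i!Suc j)" using PL by simp
          have "rr i j < rr i (Suc j)" by (rule cl[OF i j Pij i j1]) simp
          then show False using cr[OF i j1 pp] e u1 r by (auto simp: less_Suc_eq numeral_3_eq_3)
        qed
      next
        assume i1: "Suc i < length R" and j1: "j < length (R!Suc i)"
        show "R!Suc i!j \<noteq> Suc a"
        proof
          assume e: "R!Suc i!j = Suc a"
          then have pp: "P (R!Suc i!j)" using PL by simp
          have "rr (Suc i) j < rr i j" by (rule cl[OF i1 j1 pp i j]) (use pl[OF i1 j1 i j] in simp)
          then show False using cr[OF i1 j1 pp] e u1 r by (auto simp: less_Suc_eq numeral_3_eq_3)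
        qed
      qed
    qed simp
  next
    assume u1: "u = [a,Suc a,Suc a]" and "sig3 a u = [a,a,Suc a]"
    then have "sig3 a u = u[1 := a]" by simp
    then show ?thesis using u1
    proof (intro gen)
      fix i j assume i: "i < length R" and j: "j < length (R!i)" and Pij: "P (R!i!j)" and r: "rr i j = 1"
      have v: "R!i!j = Suc a" using cr[OF i j Pij] r u1 by simp
      show "ssR (R[i := (R!i)[j := a]])"
      proof (rule flip_down[OF s i j v])
        assume j0: "0 < j"
        have j1: "j - 1 < length (R!i)" using j by simp
        show "R!i!(j-1) \<noteq> Suc a"
        proof
          assume e: "R!i!(j-1) = Suc a"
          then have pp: "P (R!i!(j-1))" using PL by simp
          have "rr i (j-1) < rr i j" by (rule cl[OF i j1 pp i j]) (use j0 in simp)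
          then show False using cr[OF i j1 pp] e u1 r by (auto simp: less_Suc_eq numeral_3_eq_3)
        qed
      next
        assume i0: "0 < i"
        have i1: "i - 1 < length R" using i by simp
        have j1: "j < length (R!(i-1))" using len[of "i-1" i] i j by simp
        show "R!(i-1)!j \<noteq> a"
        proof
          assume e: "R!(i-1)!j = a"
          then have pp: "P (R!(i-1)!j)" using PL by simp
          have "rr i j < rr (i-1) j" by (rule cl[OF i j Pij i1 j1]) (use pl[OF i j i1 j1] i0 in simp)
          then show False using cr[OF i1 j1 pp] e u1 r by (auto simp: less_Suc_eq numeral_3_eq_3)
        qed
      qed
    qed simp
  next
    assume u1: "u = [a,Suc a,a]" and "sig3 a u = [Suc a,Suc a,a]"
    then have "sig3 a u = u[0 := Suc a]" by simp
    then show ?thesis using u1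
    proof (intro gen)
      fix i j assume i: "i < length R" and j: "j < length (R!i)" and Pij: "P (R!i!j)" and r: "rr i j = 0"
      have v: "R!i!j = a" using cr[OF i j Pij] r u1 by simp
      show "ssR (R[i := (R!i)[j := Suc a]])"
      proof (rule flip_up[OF s i j v])
        assume j1: "Suc j < length (R!i)"
        show "R!i!Suc j \<noteq> a"
        proof
          assume e: "R!i!Suc j = a"
          then have pp: "P (R!i!Suc j)" using PL by simp
          have q: "off R i + j < length w" "P (w ! (off R i + j))" using cell_rk[where P=P, OF i j Pij] w_def by auto
          have "rr i (Suc j) = Suc (rr i j)" using rk_Suc[OF q(1), of P] q(2) by (simp add: rr_def)
          then show False using cr[OF i j1 pp] e u1 r by auto
        qed
      next
        assume i1: "Suc i < length R" and j1: "j < length (R!Suc i)"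
        show "R!Suc i!j \<noteq> Suc a"
        proof
          assume e: "R!Suc i!j = Suc a"
          then have pp: "P (R!Suc i!j)" using PL by simp
          have "rr (Suc i) j < rr i j" by (rule cl[OF i1 j1 pp i j]) (use pl[OF i1 j1 i j] in simp)
          then show False using r by simp
        qed
      qed
    qed simp
  next
    assume u1: "u = [Suc a,Suc a,a]" and "sig3 a u = [a,Suc a,a]"
    then have "sig3 a u = u[0 := a]" by simp
    then show ?thesis using u1
    proof (intro gen)
      fix i j assume i: "i < length R" and j: "j < length (R!i)" and Pij: "P (R!i!j)" and r: "rr i j = 0"
      have v: "R!i!j = Suc a" using cr[OF i j Pij] r u1 by simp
      show "ssR (R[i := (R!i)[j := a]])"
      proof (rule flip_down[OF s i j v])
        assume j0: "0 < j"
        have j1: "j - 1 < length (R!i)" using j by simp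
        show "R!i!(j-1) \<noteq> Suc a"
        proof
          assume e: "R!i!(j-1) = Suc a"
          then have pp: "P (R!i!(j-1))" using PL by simp
          have "rr i (j-1) < rr i j" by (rule cl[OF i j1 pp i j]) (use j0 in simp)
          then show False using r by simp
        qed
      next
        assume i0: "0 < i"
        define i' where "i' = i - 1"
        have ii: "i = Suc i'" using i0 i'_def by simp
        have i1: "i' < length R" using i ii by simp
        have j1: "j < length (R!i')" using len[of i' i] i j ii by simp
        show "R!(i-1)!j \<noteq> a"
        proof
          assume e0: "R!(i-1)!j = a"
          then have e: "R!i'!j = a" using i'_def by simp
          then have pp: "P (R!i'!j)" using PL by simp
          have rb: "rr i' j < 3" "u ! rr i' j = a" using cr[OF i1 j1 pp] e u1 by auto
          then have r2: "rr i' j = 2" using u1 by (auto simp: less_Suc_eq numeral_3_eq_3)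
          obtain i2 j2 where c2: "i2 < length R" "j2 < length (R!i2)" "P (R!i2!j2)" "rr i2 j2 = 1"
            using ex[of 1] u1 by auto
          have v2: "R!i2!j2 = Suc a" using cr[OF c2(1-3)] c2(4) u1 by simp
          have o1: "off R i + j < off R i2 + j2" by (rule clr[OF i j Pij c2(1-3)]) (simp add: r c2(4))
          have o2: "off R i2 + j2 < off R i' + j" by (rule clr[OF c2(1-3) i1 j1 pp]) (simp add: r2 c2(4))
          have cc: "(i2 = i \<and> j < j2) \<or> (i2 = i' \<and> j2 < j)"
            using o1 o2 pl[OF i j c2(1,2)] pl[OF c2(1,2) i1 j1] ii by auto
          then show False
          proof
            assume "i2 = i' \<and> j2 < j"
            then have "R!i'!j2 \<le> R!i'!j" using srt[OF i1, of j2 j] j1 by simp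
            then show False using v2 e \<open>i2 = i' \<and> j2 < j\<close> by simp
          next
            assume h: "i2 = i \<and> j < j2"
            have j2': "j2 < length (R!i')" using len[of i' i] i ii h c2(2) by simp
            have "R!i'!j2 < R!i!j2" using col[of i' j2] i ii h c2(2) by simp
            moreover have "R!i'!j \<le> R!i'!j2" using srt[OF i1, of j j2] j2' h by simp
            ultimately have e2: "R!i'!j2 = a" using e v2 h by simp
            then have pp2: "P (R!i'!j2)" using PL by simp
            have "rr i' j < rr i' j2" by (rule cl[OF i1 j1 pp i1 j2']) (use h in simp)
            then show False using cr[OF i1 j2' pp2] r2 u1 by simp
          qed
        qed
      qed
    qed simp
  next
    assume u1: "u = [Suc a,a,a]" and "sig3 a u = [Suc a,a,Suc a]"
    then have "sig3 a u = u[2 := Suc a]" by simp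
    then show ?thesis using u1
    proof (intro gen)
      fix i j assume i: "i < length R" and j: "j < length (R!i)" and Pij: "P (R!i!j)" and r: "rr i j = 2"
      have v: "R!i!j = a" using cr[OF i j Pij] r u1 by simp
      show "ssR (R[i := (R!i)[j := Suc a]])"
      proof (rule flip_up[OF s i j v])
        assume j1: "Suc j < length (R!i)"
        show "R!i!Suc j \<noteq> a"
        proof
          assume e: "R!i!Suc j = a"
          then have pp: "P (R!i!Suc j)" using PL by simp
          have "rr i j < rr i (Suc j)" by (rule cl[OF i j Pij i j1]) simp
          then show False using cr[OF i j1 pp] u1 r by simp
        qed
      next
        assume i1: "Suc i < length R" and j1: "j < length (R!Suc i)"
        show "R!Suc i!j \<noteq> Suc a"
        proof
          assume e: "R!Suc i!j = Suc a"
          then have pp: "P (R!Suc i!j)" using PL by simp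
          have rb: "rr (Suc i) j < 3" "u ! rr (Suc i) j = Suc a" using cr[OF i1 j1 pp] e u1 by auto
          then have r0: "rr (Suc i) j = 0" using u1 by (auto simp: less_Suc_eq numeral_3_eq_3)
          obtain i2 j2 where c2: "i2 < length R" "j2 < length (R!i2)" "P (R!i2!j2)" "rr i2 j2 = 1"
            using ex[of 1] u1 by auto
          have v2: "R!i2!j2 = a" using cr[OF c2(1-3)] c2(4) u1 by simp
          have o1: "off R (Suc i) + j < off R i2 + j2" by (rule clr[OF i1 j1 pp c2(1-3)]) (simp add: r0 c2(4))
          have o2: "off R i2 + j2 < off R i + j" by (rule clr[OF c2(1-3) i j Pij]) (simp add: r c2(4))
          have cc: "(i2 = Suc i \<and> j < j2) \<or> (i2 = i \<and> j2 < j)"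
            using o1 o2 pl[OF i1 j1 c2(1,2)] pl[OF c2(1,2) i j] by auto
          then show False
          proof
            assume h: "i2 = Suc i \<and> j < j2"
            then have "R!Suc i!j \<le> R!Suc i!j2" using srt[OF i1, of j j2] c2(2) by simp
            then show False using v2 e h by simp
          next
            assume h: "i2 = i \<and> j2 < j"
            have j2': "j2 < length (R!Suc i)" using h j1 by simp
            have "R!i!j2 < R!Suc i!j2" using col[OF i1 j2'] .
            moreover have "R!Suc i!j2 \<le> R!Suc i!j" using srt[OF i1, of j2 j] j1 h by simp
            ultimately have e2: "R!Suc i!j2 = Suc a" using e v2 h by simp
            then have pp2: "P (R!Suc i!j2)" using PL by simp
            have "rr (Suc i) j2 < rr (Suc i) j" by (rule cl[OF i1 j2' pp2 i1 j1]) (use h in simp)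
            then show False using r0 by simp
          qed
        qed
      qed
    qed simp
  next
    assume u1: "u = [Suc a,a,Suc a]" and "sig3 a u = [Suc a,a,a]"
    then have "sig3 a u = u[2 := a]" by simp
    then show ?thesis using u1
    proof (intro gen)
      fix i j assume i: "i < length R" and j: "j < length (R!i)" and Pij: "P (R!i!j)" and r: "rr i j = 2"
      have v: "R!i!j = Suc a" using cr[OF i j Pij] r u1 by simp
      show "ssR (R[i := (R!i)[j := a]])"
      proof (rule flip_down[OF s i j v])
        assume j0: "0 < j"
        have j1: "j - 1 < length (R!i)" using j by simp
        show "R!i!(j-1) \<noteq> Suc a"
        proof
          assume e: "R!i!(j-1) = Suc a"
          then have pp: "P (R!i!(j-1))" using PL by simp
          have q: "off R i + (j-1) < length w" "P (w ! (off R i + (j-1)))" using cell_rk[where P=P, OF i j1 pp] w_def by auto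
          have "rr i (Suc (j-1)) = Suc (rr i (j-1))" using rk_Suc[OF q(1), of P] q(2) by (simp add: rr_def)
          then have "rr i (j-1) = 1" using j0 r by simp
          then show False using cr[OF i j1 pp] e u1 by simp
        qed
      next
        assume i0: "0 < i"
        have i1: "i - 1 < length R" using i by simp
        have j1: "j < length (R!(i-1))" using len[of "i-1" i] i j by simp
        show "R!(i-1)!j \<noteq> a"
        proof
          assume e: "R!(i-1)!j = a"
          then have pp: "P (R!(i-1)!j)" using PL by simp
          have "rr i j < rr (i-1) j" by (rule cl[OF i j Pij i1 j1]) (use pl[OF i j i1 j1] i0 in simp)
          then show False using cr[OF i1 j1 pp] u1 r by simp
        qed
      qed
    qed simp
  qed
qed


lemma ss_sigma:
  assumes s: "semistandard T" and sc: "scond a (snd T)"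
  shows "semistandard (on_tab (sigma a) T)"
proof -
  let ?R = "rows T"
  have T: "T = tab_of ?R" "ssR ?R" using semistandard_rows[OF s] by auto
  have w: "snd T = concat (rev ?R)" using T(1) by (metis snd_conv tab_of_def)
  have f: "fst T = map length ?R" using T(1) by (metis fst_conv tab_of_def)
  obtain R' where R': "sigma a (concat (rev ?R)) = concat (rev R')" "map length R' = map length ?R" "ssR R'"
    using L3[OF T(2)] sc w by auto
  have "on_tab (sigma a) T = tab_of R'" using R' w f by (simp add: on_tab_def tab_of_def)
  then show ?thesis using R'(3) semistandard_tab_of by simp
qed

definition SSc :: "nat list \<Rightarrow> tableau set" where
  "SSc cs = {T. semistandard T \<and> hasc (snd T) cs}"

lemma swap_sum:
  assumes v: "valid (xs @ p # q # ys)" and pq: "(p, q) \<in> {(1,2),(2,1)}"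
  shows "(\<Sum>T\<in>SSc (xs @ p # q # ys). f (VS T)) = (\<Sum>T\<in>SSc (xs @ q # p # ys). f (VS T))"
proof -
  let ?a = "Suc (length xs)"
  let ?g = "on_tab (sigma ?a)"
  have v2: "valid (xs @ q # p # ys)" using v by (auto simp: valid_def)
  have pq2: "(q, p) \<in> {(1,2),(2,1)}" using pq by auto
  have mp: "?g T \<in> SSc (ys2 @ q2 # p2 # zs2) \<and> ?g (?g T) = T \<and> VS (?g T) = VS T"
    if "T \<in> SSc (ys2 @ p2 # q2 # zs2)" "valid (ys2 @ p2 # q2 # zs2)" "(p2, q2) \<in> {(1,2),(2,1)}" "ys2 = xs"
    for T ys2 p2 q2 zs2
  proof -
    have s: "semistandard T" and h: "hasc (snd T) (ys2 @ p2 # q2 # zs2)" using that by (auto simp: SSc_def)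
    have sc: "scond ?a (snd T)" using hasc_sigma(1)[OF h that(3)] that(4) by simp
    have h2: "hasc (sigma ?a (snd T)) (ys2 @ q2 # p2 # zs2)" using hasc_sigma(2)[OF h that(3)] that(4) by simp
    have "?g T \<in> SSc (ys2 @ q2 # p2 # zs2)" using ss_sigma[OF s sc] h2 by (simp add: SSc_def on_tab_def)
    moreover have "?g (?g T) = T" using sigma_invol[OF sc] by (simp add: on_tab_def)
    moreover have "VS (?g T) = VS T" using VS_sigma[OF that(2) that(3) h, of ?a "fst T"] that(4)
      by (simp add: on_tab_def)
    ultimately show ?thesis by blast
  qed
  show ?thesis
  proof (rule sum.reindex_bij_witness[where i = ?g and j = ?g])
    fix T assume "T \<in> SSc (xs @ p # q # ys)"
    then show "?g (?g T) = T" "?g T \<in> SSc (xs @ q # p # ys)" "f (VS (?g T)) = f (VS T)"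
      using mp[OF _ v pq refl] by auto
  next
    fix T assume "T \<in> SSc (xs @ q # p # ys)"
    then show "?g (?g T) = T" "?g T \<in> SSc (xs @ p # q # ys)"
      using mp[OF _ v2 pq2 refl] by auto
  qed
qed

lemma move_two:
  "valid X \<Longrightarrow> (\<Sum>T\<in>SSc (X @ 2 # replicate m 1). f (VS T)) = (\<Sum>T\<in>SSc (X @ replicate m 1 @ [2]). f (VS T))"
proof (induction m arbitrary: X)
  case 0 then show ?case by simp
next
  case (Suc m)
  have v: "valid (X @ 2 # 1 # replicate m 1)" using Suc.prems by (auto simp: valid_def)
  have "(\<Sum>T\<in>SSc (X @ 2 # replicate (Suc m) 1). f (VS T)) = (\<Sum>T\<in>SSc (X @ 1 # 2 # replicate m 1). f (VS T))"
    using swap_sum[OF v, of f] by simp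
  also have "\<dots> = (\<Sum>T\<in>SSc ((X @ [1]) @ 2 # replicate m 1). f (VS T))" by simp
  also have "\<dots> = (\<Sum>T\<in>SSc ((X @ [1]) @ replicate m 1 @ [2]). f (VS T))"
    using Suc.IH[of "X @ [1]"] Suc.prems by (simp add: valid_def)
  also have "(X @ [1]) @ replicate m 1 @ [2] = X @ replicate (Suc m) 1 @ [2]"
    by (simp add: replicate_append_same[symmetric])
  finally show ?case .
qed

lemma claimB:
  "(\<Sum>T\<in>SSc (2 # replicate l 2 @ replicate m 1). f (VS T)) = (\<Sum>T\<in>SSc ((replicate l 2 @ replicate m 1) @ [2]). f (VS T))"
proof -
  have e: "(2::nat) # replicate l 2 @ replicate m 1 = replicate l 2 @ 2 # replicate m 1"
    by (simp add: replicate_append_same[symmetric])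
  have "valid (replicate l 2)" by (auto simp: valid_def)
  then show ?thesis unfolding e using move_two[where X="replicate l 2" and m=m and f=f] by simp
qed


lemma fst_tab_of[simp]: "fst (tab_of R) = map length R" by (simp add: tab_of_def)
lemma snd_tab_of[simp]: "snd (tab_of R) = concat (rev R)" by (simp add: tab_of_def)

definition RA :: "nat \<Rightarrow> nat list list \<Rightarrow> nat list \<Rightarrow> nat list list" where
  "RA m R sh' = map (\<lambda>i. (if i < length R then R!i else []) @ replicate (sh'!i - pget (map length R) i) m) [0..<length sh']"

lemma add_cells_tab_of: "add_cells m (tab_of R) sh' = (sh', concat (rev (RA m R sh')))"
  unfolding add_cells_def RA_def rows_tab_of fst_tab_of by simp

lemma count_concat_rev: "count_list (concat (rev R)) x = (\<Sum>i<length R. count_list (R!i) x)"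
proof -
  have "count_list (concat (rev R)) x = count_list (concat R) x"
    by (induction R) auto
  also have "\<dots> = sum_list (map (\<lambda>r. count_list r x) R)" by (induction R) auto
  also have "\<dots> = (\<Sum>i<length R. count_list (R!i) x)"
    by (simp add: sum_list_sum_nth atLeast0LessThan)
  finally show ?thesis .
qed

lemma count_list_replicate: "count_list (replicate k m) x = (if x = m then k else 0)"
  by (induction k) auto

lemma pget_map: "pget (map length R) i = (if i < length R then length (R!i) else 0)"
  by (simp add: pget_def)

lemma add2_props:
  assumes p: "is_partition (map length R)" and s: "sh' \<in> add2_shapes (map length R)"
  shows "length R \<le> length sh'" "\<And>i. i < length sh' \<Longrightarrow> pget (map length R) i \<le> sh'!i"
    "\<And>i. pget sh' (Suc i) \<le> pget (map length R) i" "is_partition sh'" "sum_list sh' = sum_list (map length R) + 2"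
proof -
  have le: "\<And>i. pget (map length R) i \<le> pget sh' i" using s by (auto simp: add2_shapes_def)
  show "\<And>i. pget sh' (Suc i) \<le> pget (map length R) i" using s by (auto simp: add2_shapes_def)
  show ps: "is_partition sh'" "sum_list sh' = sum_list (map length R) + 2" using s by (auto simp: add2_shapes_def)
  show "length R \<le> length sh'"
  proof (rule ccontr)
    assume "\<not> length R \<le> length sh'"
    then have "length sh' < length R" by simp
    moreover have "0 \<notin> set (map length R)" using p by (simp add: is_partition_def)
    ultimately have "length (R ! length sh') > 0"
      by (metis gr0I length_map nth_map nth_mem)
    then show False using le[of "length sh'"] \<open>length sh' < length R\<close> by (simp add: pget_def)
  qed
  show "pget (map length R) i \<le> sh'!i" if "i < length sh'" for i
    using le[of i] that by (auto simp: pget_def split: if_splits)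
qed

lemma sorted_app_rep: "sorted xs \<Longrightarrow> (\<forall>x\<in>set xs. x \<le> m) \<Longrightarrow> sorted (xs @ replicate k m)"
  by (auto simp: sorted_append)

lemma RA_facts:
  assumes s: "ssR R" and lt: "\<forall>i<length R. \<forall>x\<in>set (R!i). x < m" and sh: "sh' \<in> add2_shapes (map length R)"
  shows "map length (RA m R sh') = sh'" "ssR (RA m R sh')"
    "\<And>x. count_list (concat (rev (RA m R sh'))) x = count_list (concat (rev R)) x + (if x = m then 2 else 0)"
proof -
  have p: "is_partition (map length R)" using s by (simp add: ssR_def)
  note ap = add2_props[OF p sh]
  let ?A = "RA m R sh'"
  have Ai: "\<And>i. i < length sh' \<Longrightarrow> ?A!i = (if i < length R then R!i else []) @ replicate (sh'!i - pget (map length R) i) m"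
    by (simp add: RA_def)
  have lA: "length ?A = length sh'" by (simp add: RA_def)
  show ml: "map length ?A = sh'"
  proof (rule nth_equalityI)
    show "length (map length ?A) = length sh'" by (simp add: RA_def)
    fix i assume "i < length (map length ?A)"
    then have i: "i < length sh'" by (simp add: RA_def)
    have "map length ?A ! i = length (?A!i)" using i lA by simp
    then show "map length ?A ! i = sh' ! i" using Ai[OF i] ap(2)[OF i] by (auto simp: pget_map)
  qed
  have srt: "\<forall>i<length ?A. sorted (?A!i)"
  proof (intro allI impI)
    fix i assume "i < length ?A"
    then have i: "i < length sh'" by (simp add: RA_def)
    show "sorted (?A!i)"
    proof (cases "i < length R")
      case True
      then have "sorted (R!i)" using s by (simp add: ssR_def)
      then show ?thesis using Ai[OF i] True lt by (auto intro!: sorted_app_rep simp: less_imp_le)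
    qed (use Ai[OF i] in simp)
  qed
  have col: "\<forall>i. Suc i < length ?A \<longrightarrow> (\<forall>j<length (?A ! Suc i). ?A!i!j < ?A!Suc i!j)"
  proof (intro allI impI)
    fix i j assume i: "Suc i < length ?A" and j: "j < length (?A ! Suc i)"
    have i': "Suc i < length sh'" "i < length sh'" using i lA by auto
    have jsh: "j < sh'!Suc i" using j ml i by (metis length_map nth_map)
    show "?A!i!j < ?A!Suc i!j"
    proof (cases "Suc i < length R \<and> j < length (R!Suc i)")
      case True
      have "length (R!Suc i) \<le> length (R!i)" using ssR_len[OF s, of i "Suc i"] True by simp
      then have "?A!i!j = R!i!j" "?A!Suc i!j = R!Suc i!j" using Ai[OF i'(1)] Ai[OF i'(2)] True
        by (auto simp: nth_append)
      then show ?thesis using ssR_col[OF s] True by simp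
    next
      case False
      then have "pget (map length R) (Suc i) \<le> j" by (auto simp: pget_map)
      then have up: "?A!Suc i!j = m" using Ai[OF i'(1)] jsh False by (auto simp: nth_append pget_map)
      have "j < pget (map length R) i" using ap(3)[of i] jsh i'(1) by (simp add: pget_def)
      then have il: "i < length R" "j < length (R!i)" by (auto simp: pget_map split: if_splits)
      then have "?A!i!j = R!i!j" using Ai[OF i'(2)] by (simp add: nth_append)
      moreover have "R!i!j < m" using lt il by simp
      ultimately show ?thesis using up by simp
    qed
  qed
  show "ssR ?A" using ml ap(4) srt col by (simp add: ssR_def)
  fix x
  have "count_list (concat (rev ?A)) x = (\<Sum>i<length sh'. count_list (?A!i) x)"
    by (simp add: count_concat_rev lA)
  also have "\<dots> = (\<Sum>i<length sh'. (if i < length R then count_list (R!i) x else 0)) +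
                  (\<Sum>i<length sh'. if x = m then sh'!i - pget (map length R) i else 0)"
    by (simp add: Ai sum.distrib[symmetric] count_list_replicate) (rule sum.cong, auto)
  also have "(\<Sum>i<length sh'. (if i < length R then count_list (R!i) x else 0)) = (\<Sum>i<length R. count_list (R!i) x)"
  proof -
    have "{..<length R} \<subseteq> {..<length sh'}" using ap(1) by auto
    then show ?thesis by (simp add: sum.If_cases Int_absorb1 lessThan_def)
  qed
  also have "\<dots> = count_list (concat (rev R)) x" by (simp add: count_concat_rev)
  also have "(\<Sum>i<length sh'. if x = m then sh'!i - pget (map length R) i else 0) = (if x = m then 2 else 0)"
  proof (cases "x = m")
    case True
    have "(\<Sum>i<length sh'. sh'!i - pget (map length R) i) = (\<Sum>i<length sh'. sh'!i) - (\<Sum>i<length sh'. pget (map length R) i)"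
      using ap(2) by (intro sum_subtractf_nat) auto
    moreover have "(\<Sum>i<length sh'. sh'!i) = sum_list sh'" by (simp add: sum_list_sum_nth atLeast0LessThan)
    moreover have "(\<Sum>i<length sh'. pget (map length R) i) = sum_list (map length R)"
    proof -
      have "(\<Sum>i<length sh'. pget (map length R) i) = (\<Sum>i<length R. length (R!i))"
      proof -
        have "{..<length R} \<subseteq> {..<length sh'}" using ap(1) by auto
        then show ?thesis unfolding pget_map
          by (simp add: sum.If_cases Int_absorb1 lessThan_def)
      qed
      also have "\<dots> = sum_list (map length R)" by (simp add: sum_list_sum_nth atLeast0LessThan)
      finally show ?thesis .
    qed
    ultimately show ?thesis using True ap(5) by simp
  qed simp
  finally show "count_list (concat (rev ?A)) x = count_list (concat (rev R)) x + (if x = m then 2 else 0)" .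
qed


lemma sorted_split_max:
  "sorted r \<Longrightarrow> (\<forall>x\<in>set r. x \<le> m) \<Longrightarrow> r = filter (\<lambda>x. x < m) r @ replicate (count_list r m) m"
proof (induction r)
  case Nil then show ?case by simp
next
  case (Cons x r)
  show ?case
  proof (cases "x < m")
    case True then show ?thesis using Cons by auto
  next
    case False
    then have xm: "x = m" using Cons.prems by auto
    then have "\<forall>y\<in>set r. y = m" using Cons.prems by fastforce
    then have "r = replicate (length r) m" by (simp add: replicate_length_same)
    moreover have "filter (\<lambda>x. x < m) r = []" using \<open>\<forall>y\<in>set r. y = m\<close> by (auto simp: filter_empty_conv)
    moreover have "count_list r m = length r"
      using count_list_replicate[of "length r" m m] \<open>r = replicate (length r) m\<close> by simp
    ultimately show ?thesis using xm by simp
  qed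
qed

lemma set_rows_sub: "i < length R \<Longrightarrow> set (R!i) \<subseteq> set (concat (rev R))"
  using nth_mem by fastforce

lemma colbound:
  assumes s: "ssR R" and le: "\<forall>i<length R. \<forall>x\<in>set (R!i). x \<le> m" and i: "Suc i < length R"
  shows "length (R!Suc i) \<le> length (filter (\<lambda>x. x < m) (R!i))"
proof (rule ccontr)
  define F where "F = filter (\<lambda>x. x < m) (R!i)"
  define c where "c = count_list (R!i) m"
  assume "\<not> length (R!Suc i) \<le> length (filter (\<lambda>x. x < m) (R!i))"
  then have j: "length F < length (R!Suc i)" by (simp add: F_def)
  have i': "i < length R" using i by simp
  have sp: "R!i = F @ replicate c m"
    using sorted_split_max[of "R!i" m] s le i' by (simp add: ssR_def F_def c_def)
  have l: "length (R!Suc i) \<le> length (R!i)" using ssR_len[OF s, of i "Suc i"] i by simp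
  have "length F < length (R!i)" using j l by simp
  then have "0 < c" using sp by simp
  then have "R!i!length F = m" using sp by (simp add: nth_append)
  moreover have "R!i!length F < R!Suc i!length F" using ssR_col[OF s i j] .
  moreover have "R!Suc i!length F \<le> m" using le i j by simp
  ultimately show False by simp
qed


lemma letters_le: "hasc w cs \<Longrightarrow> x \<in> set w \<Longrightarrow> 0 < x \<and> x \<le> length cs"
proof -
  assume h: "hasc w cs" "x \<in> set w"
  then have "count_list w x \<noteq> 0" by (simp add: count_list_0_iff)
  then have "cf cs x \<noteq> 0" using h by (simp add: hasc_def ev_def)
  then show ?thesis by (simp add: cf_def split: if_splits)
qed

lemma cf_snoc: "cf (cs @ [2]) x = (if x = Suc (length cs) then 2 else cf cs x)"
  by (auto simp: cf_def nth_append)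

lemma count_filter: "count_list (filter P xs) x = (if P x then count_list xs x else 0)"
  by (induction xs) auto

lemma SSc_tab: "T \<in> SSc cs \<Longrightarrow> T = tab_of (rows T) \<and> ssR (rows T) \<and> hasc (concat (rev (rows T))) cs"
proof -
  assume "T \<in> SSc cs"
  then have s: "semistandard T" "hasc (snd T) cs" by (auto simp: SSc_def)
  have "T = tab_of (rows T)" "ssR (rows T)" using semistandard_rows[OF s(1)] by auto
  moreover then have "snd T = concat (rev (rows T))" by (metis snd_tab_of)
  ultimately show ?thesis using s(2) by simp
qed

lemma add_in:
  assumes T: "T \<in> SSc cs" and sh: "sh' \<in> add2_shapes (fst T)" and m: "m = Suc (length cs)"
  shows "add_cells m T sh' \<in> SSc (cs @ [2])"
proof -
  let ?R = "rows T"
  have TT: "T = tab_of ?R" "ssR ?R" "hasc (concat (rev ?R)) cs" using SSc_tab[OF T] by auto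
  have lt: "\<forall>i<length ?R. \<forall>x\<in>set (?R!i). x < m"
    using letters_le[OF TT(3)] set_rows_sub m by fastforce
  have sh2: "sh' \<in> add2_shapes (map length ?R)" using sh TT(1) by (metis fst_tab_of)
  note F = RA_facts[OF TT(2) lt sh2]
  have e: "add_cells m T sh' = tab_of (RA m ?R sh')"
    using add_cells_tab_of[of m ?R sh'] TT(1) F(1) by (simp add: tab_of_def)
  have "hasc (concat (rev (RA m ?R sh'))) (cs @ [2])"
    unfolding hasc_def ev_def
  proof
    fix x
    have "cf cs m = 0" using m by (simp add: cf_def)
    then show "count_list (concat (rev (RA m ?R sh'))) x = cf (cs @ [2]) x"
      using F(3)[of x] TT(3) m by (auto simp: hasc_def ev_def cf_snoc)
  qed
  then show ?thesis using e F(2) semistandard_tab_of by (simp add: SSc_def)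
qed

definition remv :: "nat \<Rightarrow> tableau \<Rightarrow> tableau \<times> nat list" where
  "remv m T' = (tab_of (takeWhile (\<lambda>r. r \<noteq> []) (map (filter (\<lambda>x. x < m)) (rows T'))), fst T')"

lemma rem_add:
  assumes T: "T \<in> SSc cs" and sh: "sh' \<in> add2_shapes (fst T)" and m: "m = Suc (length cs)"
  shows "remv m (add_cells m T sh') = (T, sh')"
proof -
  let ?R = "rows T"
  have TT: "T = tab_of ?R" "ssR ?R" "hasc (concat (rev ?R)) cs" using SSc_tab[OF T] by auto
  have lt: "\<forall>i<length ?R. \<forall>x\<in>set (?R!i). x < m"
    using letters_le[OF TT(3)] set_rows_sub m by fastforce
  have sh2: "sh' \<in> add2_shapes (map length ?R)" using sh TT(1) by (metis fst_tab_of)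
  have p: "is_partition (map length ?R)" using TT(2) by (simp add: ssR_def)
  note F = RA_facts[OF TT(2) lt sh2]
  note ap = add2_props[OF p sh2]
  have e: "add_cells m T sh' = tab_of (RA m ?R sh')"
    using add_cells_tab_of[of m ?R sh'] TT(1) F(1) by (simp add: tab_of_def)
  have mf: "map (filter (\<lambda>x. x < m)) (RA m ?R sh') = ?R @ replicate (length sh' - length ?R) []"
  proof (rule nth_equalityI)
    show "length (map (filter (\<lambda>x. x < m)) (RA m ?R sh')) = length (?R @ replicate (length sh' - length ?R) [])"
      using ap(1) by (simp add: RA_def)
    fix i assume "i < length (map (filter (\<lambda>x. x < m)) (RA m ?R sh'))"
    then have i: "i < length sh'" by (simp add: RA_def)
    show "map (filter (\<lambda>x. x < m)) (RA m ?R sh') ! i = (?R @ replicate (length sh' - length ?R) []) ! i"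
    proof (cases "i < length ?R")
      case True
      then have "filter (\<lambda>x. x < m) (?R!i) = ?R!i" using lt by (simp add: filter_id_conv)
      then show ?thesis using i True by (simp add: RA_def nth_append filter_replicate)
    next
      case False
      then show ?thesis using i by (simp add: RA_def nth_append filter_replicate)
    qed
  qed
  have ne: "\<And>r. r \<in> set ?R \<Longrightarrow> r \<noteq> []" using p by (auto simp: is_partition_def)
  have "takeWhile (\<lambda>r. r \<noteq> []) (?R @ replicate (length sh' - length ?R) []) = ?R"
    using ne by (cases "length sh' - length ?R") (auto simp: takeWhile_append2)
  then show ?thesis using e mf TT(1) F(1) by (simp add: remv_def)
qed

lemma mono_chain: "(\<And>i. Suc i < n \<Longrightarrow> f (Suc i) \<le> (f i :: nat)) \<Longrightarrow> t \<le> i \<Longrightarrow> i < n \<Longrightarrow> f i \<le> f t"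
proof (induction i)
  case 0 then show ?case by simp
next
  case (Suc i)
  show ?case
  proof (cases "t = Suc i")
    case False
    then have "f i \<le> f t" using Suc by simp
    moreover have "f (Suc i) \<le> f i" using Suc.prems by simp
    ultimately show ?thesis by simp
  qed simp
qed

lemma rem_props:
  assumes T': "T' \<in> SSc (cs @ [2])" and m: "m = Suc (length cs)"
  shows "fst (remv m T') \<in> SSc cs" "snd (remv m T') \<in> add2_shapes (fst (fst (remv m T')))"
    "add_cells m (fst (remv m T')) (snd (remv m T')) = T'"
proof -
  define R' where "R' = rows T'"
  have TT: "T' = tab_of R'" "ssR R'" "hasc (concat (rev R')) (cs @ [2])" using SSc_tab[OF T'] R'_def by auto
  have le: "\<forall>i<length R'. \<forall>x\<in>set (R'!i). x \<le> m"
    using letters_le[OF TT(3)] set_rows_sub m by fastforce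
  define L where "L = map (filter (\<lambda>x. x < m)) R'"
  define R where "R = takeWhile (\<lambda>r. r \<noteq> []) L"
  define c where "c = (\<lambda>i. count_list (R'!i) m)"
  have lL: "length L = length R'" by (simp add: L_def)
  have sp: "R'!i = L!i @ replicate (c i) m" if i: "i < length R'" for i
  proof -
    have "sorted (R'!i)" using TT(2) i by (simp add: ssR_def)
    then have sp0: "R'!i = filter (\<lambda>x. x < m) (R'!i) @ replicate (count_list (R'!i) m) m"
      using sorted_split_max le i by blast
    have eqL: "L!i = filter (\<lambda>x. x < m) (R'!i)" using i by (simp add: L_def)
    show ?thesis unfolding eqL c_def by (rule sp0)
  qed
  have lens: "length (R'!i) = length (L!i) + c i" if i: "i < length R'" for i
  proof -
    have "length (R'!i) = length (L!i @ replicate (c i) m)" using sp[OF i] by (rule arg_cong)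
    then show ?thesis by simp
  qed
  have cb: "\<And>i. Suc i < length R' \<Longrightarrow> length (R'!Suc i) \<le> length (L!i)"
    using colbound[OF TT(2) le] by (simp add: L_def)
  have mono: "\<And>i. Suc i < length L \<Longrightarrow> length (L!Suc i) \<le> length (L!i)"
  proof -
    fix i assume i: "Suc i < length L"
    have "length (L!Suc i) \<le> length (R'!Suc i)" using i lL by (simp add: L_def)
    moreover have "length (R'!Suc i) \<le> length (L!i)" using cb[of i] i lL by simp
    ultimately show "length (L!Suc i) \<le> length (L!i)" by linarith
  qed
  have lR: "length R \<le> length L" by (simp add: R_def length_takeWhile_le)
  have Lr: "\<And>i. i < length R \<Longrightarrow> L!i = R!i" by (simp add: R_def takeWhile_nth)
  have Lz: "\<And>i. length R \<le> i \<Longrightarrow> i < length L \<Longrightarrow> L!i = []"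
  proof -
    fix i assume i: "length R \<le> i" "i < length L"
    then have "length R < length L" by simp
    then have "L ! length R = []" using nth_length_takeWhile[of "\<lambda>r. r \<noteq> []" L] by (simp add: R_def)
    moreover have "length (L!i) \<le> length (L ! length R)"
      using mono_chain[of "length L" "\<lambda>k. length (L!k)" "length R" i] mono i by simp
    ultimately show "L!i = []" by simp
  qed
  have Li: "L!i = (if i < length R then R!i else [])" if "i < length L" for i
    using Lr[of i] Lz[of i] that by (cases "i < length R") auto
  have pg: "\<And>i. pget (map length R) i = (if i < length L then length (L!i) else 0)"
    using Li lR by (auto simp: pget_map)
  have neR: "\<And>r. r \<in> set R \<Longrightarrow> r \<noteq> []" by (auto simp: R_def dest: set_takeWhileD)
  have srtR: "\<forall>i<length R. sorted (R!i)"
  proof (intro allI impI)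
    fix i assume i: "i < length R"
    then have "R!i = filter (\<lambda>x. x < m) (R'!i)" using Lr[OF i] lR lL by (simp add: L_def)
    moreover have "sorted (R'!i)" using TT(2) i lR lL by (simp add: ssR_def)
    ultimately show "sorted (R!i)" by (simp add: sorted_wrt_filter)
  qed
  have RR': "\<And>i j. i < length R \<Longrightarrow> j < length (R!i) \<Longrightarrow> R!i!j = R'!i!j"
  proof -
    fix i j assume i: "i < length R" and j: "j < length (R!i)"
    have "R'!i = R!i @ replicate (c i) m" using sp[of i] Lr[OF i] i lR lL by simp
    then show "R!i!j = R'!i!j" using j by (simp add: nth_append)
  qed
  have ssR: "ssR R"
    unfolding ssR_def
  proof (intro conjI)
    show "is_partition (map length R)"
      unfolding is_partition_def
    proof
      have tr: "transp ((\<ge>)::nat\<Rightarrow>nat\<Rightarrow>bool)" by (auto simp: transp_def)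
      show "sorted_wrt (\<ge>) (map length R)"
        unfolding sorted_wrt_iff_nth_Suc_transp[OF tr]
      proof (intro allI impI)
        fix i assume i: "Suc i < length (map length R)"
        then show "map length R ! i \<ge> map length R ! Suc i"
          using mono[of i] Lr[of i] Lr[of "Suc i"] lR by simp
      qed
      show "0 \<notin> set (map length R)" using neR by auto
    qed
    show "\<forall>i<length R. sorted (R!i)" by (rule srtR)
    show "\<forall>i. Suc i < length R \<longrightarrow> (\<forall>j<length (R ! Suc i). R!i!j < R!Suc i!j)"
    proof (intro allI impI)
      fix i j assume i: "Suc i < length R" and j: "j < length (R!Suc i)"
      have "length (R!Suc i) \<le> length (R!i)" using mono[of i] Lr[of i] Lr[of "Suc i"] i lR by simp
      then have j': "j < length (R!i)" using j by simp
      have si: "Suc i < length R'" using i lR lL by simp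
      have jR': "j < length (R'!Suc i)" using lens[OF si] Lr[of "Suc i"] i j by simp
      have "R'!i!j < R'!Suc i!j" by (rule ssR_col[OF TT(2) si jR'])
      then show "R!i!j < R!Suc i!j" using RR'[OF _ j'] RR'[OF i j] i by simp
    qed
  qed
  have hR: "hasc (concat (rev R)) cs"
    unfolding hasc_def ev_def
  proof
    fix x
    have "count_list (concat (rev R)) x = (\<Sum>i<length R. count_list (R!i) x)" by (rule count_concat_rev)
    also have "\<dots> = (\<Sum>i<length L. count_list (L!i) x)"
    proof -
      have "(\<Sum>i<length L. count_list (L!i) x) = (\<Sum>i<length L. if i < length R then count_list (R!i) x else 0)"
        using Li by (intro sum.cong) auto
      also have "\<dots> = (\<Sum>i<length R. count_list (R!i) x)"
      proof -
        have eqs: "{..<length L} \<inter> {i. i < length R} = {..<length R}" using lR by auto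
        show ?thesis by (simp add: sum.If_cases eqs)
      qed
      finally show ?thesis by simp
    qed
    also have "\<dots> = (\<Sum>i<length R'. if x < m then count_list (R'!i) x else 0)"
      using lL by (intro sum.cong) (auto simp: L_def count_filter)
    also have "\<dots> = (if x < m then count_list (concat (rev R')) x else 0)"
      by (simp add: count_concat_rev)
    also have "\<dots> = cf cs x"
    proof -
      have "count_list (concat (rev R')) x = cf (cs @ [2]) x" using TT(3) by (simp add: hasc_def ev_def)
      then show ?thesis using m by (simp add: cf_snoc) (simp add: cf_def)
    qed
    finally show "count_list (concat (rev R)) x = cf cs x" .
  qed
  have rm: "remv m T' = (tab_of R, map length R')"
    using TT(1) by (simp add: remv_def R_def L_def R'_def[symmetric])
  show "fst (remv m T') \<in> SSc cs" using rm ssR hR semistandard_tab_of by (simp add: SSc_def)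
  have sh2: "map length R' \<in> add2_shapes (map length R)"
    unfolding add2_shapes_def
  proof (intro CollectI conjI allI)
    show "is_partition (map length R')" using TT(2) by (simp add: ssR_def)
    have "sum_list (map length R') = (\<Sum>i<length R'. length (L!i) + c i)"
      using lens by (simp add: sum_list_sum_nth atLeast0LessThan)
    also have "\<dots> = (\<Sum>i<length R'. length (L!i)) + (\<Sum>i<length R'. c i)" by (simp add: sum.distrib)
    also have "(\<Sum>i<length R'. c i) = count_list (concat (rev R')) m" by (simp add: c_def count_concat_rev)
    also have "\<dots> = 2" using TT(3) m by (simp add: hasc_def ev_def cf_snoc)
    also have "(\<Sum>i<length R'. length (L!i)) = sum_list (map length R)"
    proof -
      have "(\<Sum>i<length R'. length (L!i)) = (\<Sum>i<length R'. pget (map length R) i)" using pg lL by simp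
      also have "\<dots> = (\<Sum>i<length R. length (R!i))"
      proof -
        have eqs: "{..<length R'} \<inter> {i. i < length R} = {..<length R}" using lR lL by auto
        show ?thesis by (simp add: pget_map sum.If_cases eqs)
      qed
      also have "\<dots> = sum_list (map length R)" by (simp add: sum_list_sum_nth atLeast0LessThan)
      finally show ?thesis .
    qed
    finally show "sum_list (map length R') = sum_list (map length R) + 2" .
    fix i
    show "pget (map length R) i \<le> pget (map length R') i" using pg lens lL by (simp add: pget_def)
    show "pget (map length R') (Suc i) \<le> pget (map length R) i" using pg cb lL by (simp add: pget_def)
  qed
  show "snd (remv m T') \<in> add2_shapes (fst (fst (remv m T')))" using rm sh2 by simp
  have "RA m R (map length R') = R'"
  proof (rule nth_equalityI)
    show "length (RA m R (map length R')) = length R'" by (simp add: RA_def)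
    fix i assume "i < length (RA m R (map length R'))"
    then have i: "i < length R'" by (simp add: RA_def)
    have "RA m R (map length R') ! i = L!i @ replicate (length (R'!i) - length (L!i)) m"
      using i Li[of i] lL pg[of i] by (simp add: RA_def)
    then show "RA m R (map length R') ! i = R'!i" using sp[OF i] lens[OF i] by simp
  qed
  then show "add_cells m (fst (remv m T')) (snd (remv m T')) = T'"
    using rm add_cells_tab_of[of m R "map length R'"] TT(1) by (simp add: tab_of_def)
qed


definition BL :: "nat \<Rightarrow> nat list set" where
  "BL N = {xs. set xs \<subseteq> {0..N} \<and> length xs \<le> N}"

lemma finite_BL: "finite (BL N)"
  unfolding BL_def by (rule finite_lists_length_le) simp

lemma length_le_sum: "0 \<notin> set xs \<Longrightarrow> length xs \<le> sum_list (xs::nat list)"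
  by (induction xs) auto

lemma partition_BL: "is_partition sh \<Longrightarrow> sum_list sh \<le> N \<Longrightarrow> sh \<in> BL N"
proof -
  assume p: "is_partition sh" "sum_list sh \<le> N"
  have "\<forall>x\<in>set sh. x \<le> sum_list sh" by (auto intro: member_le_sum_list)
  moreover have "length sh \<le> sum_list sh" using p by (intro length_le_sum) (simp add: is_partition_def)
  ultimately show ?thesis using p by (auto simp: BL_def)
qed

lemma finite_add2: "is_partition sh \<Longrightarrow> finite (add2_shapes sh)"
proof -
  assume p: "is_partition sh"
  have "add2_shapes sh \<subseteq> BL (sum_list sh + 2)"
    by (auto simp: add2_shapes_def intro!: partition_BL)
  then show ?thesis using finite_BL finite_subset by blast
qed

lemma finite_SSc: "finite (SSc cs)"
proof -
  let ?K = "length cs"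
  let ?S = "sum_list cs"
  let ?N = "Suc ?K * ?S + ?K"
  have "SSc cs \<subseteq> BL ?N \<times> BL ?N"
  proof
    fix T assume T: "T \<in> SSc cs"
    then have s: "semistandard T" "hasc (snd T) cs" by (auto simp: SSc_def)
    have sub: "set (snd T) \<subseteq> {0..?K}" using letters_le[OF s(2)] by auto
    have "length (snd T) = sum (count_list (snd T)) {0..?K}" using sum_count_set[OF sub] by simp
    also have "\<dots> \<le> sum (\<lambda>_. ?S) {0..?K}"
    proof (rule sum_mono)
      fix x
      have "cf cs x \<le> ?S"
      proof (cases "0 < x \<and> x \<le> ?K")
        case True
        then have "cs ! (x - 1) \<in> set cs" by (intro nth_mem) arith
        then have "cs ! (x - 1) \<le> ?S" by (rule member_le_sum_list) simp
        then show ?thesis using True by (simp add: cf_def)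
      qed (auto simp: cf_def)
      then show "count_list (snd T) x \<le> ?S" using s(2) by (simp add: hasc_def ev_def)
    qed
    also have "\<dots> \<le> ?N" by simp
    finally have ln: "length (snd T) \<le> ?N" .
    have "snd T \<in> BL ?N" using sub ln by (fastforce simp: BL_def)
    moreover have "fst T \<in> BL ?N" using s(1) ln by (intro partition_BL) (auto simp: semistandard_def)
    ultimately show "T \<in> BL ?N \<times> BL ?N" by (cases T) auto
  qed
  then show ?thesis using finite_BL finite_subset by blast
qed


lemma claimA_sum:
  assumes m: "m = Suc (length cs)"
  shows "(\<Sum>T'\<in>SSc (cs @ [2]). g T') = (\<Sum>T\<in>SSc cs. \<Sum>s\<in>add2_shapes (fst T). g (add_cells m T s))"
proof -
  have fin: "\<forall>T\<in>SSc cs. finite (add2_shapes (fst T))"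
    by (auto simp: SSc_def semistandard_def intro: finite_add2)
  have "(\<Sum>T\<in>SSc cs. \<Sum>s\<in>add2_shapes (fst T). g (add_cells m T s)) =
        (\<Sum>p\<in>Sigma (SSc cs) (\<lambda>T. add2_shapes (fst T)). g (add_cells m (fst p) (snd p)))"
    using sum.Sigma[OF finite_SSc fin, of "\<lambda>T s. g (add_cells m T s)"] by (simp add: case_prod_beta)
  also have "\<dots> = (\<Sum>T'\<in>SSc (cs @ [2]). g T')"
  proof (rule sum.reindex_bij_witness[where i = "remv m" and j = "\<lambda>p. add_cells m (fst p) (snd p)"])
    fix p assume p: "p \<in> Sigma (SSc cs) (\<lambda>T. add2_shapes (fst T))"
    then have p1: "fst p \<in> SSc cs" "snd p \<in> add2_shapes (fst (fst p))" by auto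
    show "remv m (add_cells m (fst p) (snd p)) = p" using rem_add[OF p1 m] by simp
    show "add_cells m (fst p) (snd p) \<in> SSc (cs @ [2])" using add_in[OF p1 m] .
    show "g (add_cells m (fst p) (snd p)) = g (add_cells m (fst p) (snd p))" by (rule refl)
  next
    fix T' assume T': "T' \<in> SSc (cs @ [2])"
    show "add_cells m (fst (remv m T')) (snd (remv m T')) = T'" using rem_props(3)[OF T' m] .
    show "remv m T' \<in> Sigma (SSc cs) (\<lambda>T. add2_shapes (fst T))"
      using rem_props(1,2)[OF T' m] by (cases "remv m T'") auto
  qed
  finally show ?thesis by simp
qed

fun merge :: "bool list \<Rightarrow> nat list \<Rightarrow> nat \<Rightarrow> nat list" where
  "merge [] v m = []"
| "merge (True # bs) v m = hd v # merge bs (tl v) m"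
| "merge (False # bs) v m = m # merge bs v m"

lemma merge_T: "merge (replicate (length r) True @ bs) (r @ v) m = r @ merge bs v m"
  by (induction r) auto

lemma merge_F: "merge (replicate k False @ bs) v m = replicate k m @ merge bs v m"
  by (induction k) auto

lemma concat_merge:
  "concat (map (\<lambda>(r,k). r @ replicate k m) zs) =
   merge (concat (map (\<lambda>(r,k). replicate (length r) True @ replicate k False) zs)) (concat (map fst zs)) m"
  by (induction zs) (auto simp: merge_T merge_F)

definition maskS :: "nat list \<Rightarrow> nat list \<Rightarrow> bool list" where
  "maskS sh s' = concat (rev (map (\<lambda>i. replicate (pget sh i) True @ replicate (s'!i - pget sh i) False) [0..<length s']))"

lemma pad_rows: "length R \<le> n \<Longrightarrow> map (\<lambda>i. if i < length R then R!i else []) [0..<n] = R @ replicate (n - length R) []"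
  by (rule nth_equalityI) (auto simp: nth_append)

lemma add_cells_merge:
  assumes l: "length w = sum_list sh" and ls: "length sh \<le> length s'"
  shows "add_cells m (sh, w) s' = (s', merge (maskS sh s') w m)"
proof -
  let ?R = "rows (sh, w)"
  have T: "tab_of ?R = (sh, w)" using tab_of_rows[of "(sh,w)"] l by simp
  then have sh: "map length ?R = sh" "concat (rev ?R) = w" by (auto simp: tab_of_def)
  have lr: "length ?R = length sh" using sh(1) by (metis length_map)
  have nr: "\<And>x. x < length ?R \<Longrightarrow> length (?R!x) = sh!x" using sh(1) by (metis nth_map)
  define zs where "zs = rev (map (\<lambda>i. (if i < length ?R then ?R!i else [], s'!i - pget sh i)) [0..<length s'])"
  have "add_cells m (sh, w) s' = (s', concat (rev (RA m ?R s')))"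
    using add_cells_tab_of[of m ?R s'] T by simp
  also have "concat (rev (RA m ?R s')) = concat (map (\<lambda>(r,k). r @ replicate k m) zs)"
    by (simp add: RA_def zs_def rev_map sh(1) comp_def)
  also have "\<dots> = merge (concat (map (\<lambda>(r,k). replicate (length r) True @ replicate k False) zs)) (concat (map fst zs)) m"
    by (rule concat_merge)
  also have "concat (map (\<lambda>(r,k). replicate (length r) True @ replicate k False) zs) = maskS sh s'"
    unfolding zs_def maskS_def rev_map[symmetric] using sh(1) by (auto simp: pget_def lr nr intro!: arg_cong[where f=concat] arg_cong[where f=rev])
  also have "concat (map fst zs) = w"
  proof -
    have lR: "length ?R \<le> length s'" using ls sh(1) by (metis length_map)
    have "map fst zs = rev (R' @ replicate (length s' - length ?R) [])" if "R' = ?R" for R'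
      using pad_rows[OF lR] that by (simp add: zs_def rev_map[symmetric] comp_def)
    then have "concat (map fst zs) = concat (rev (?R @ replicate (length s' - length ?R) []))" by simp
    also have "\<dots> = concat (rev ?R)" by simp
    finally show ?thesis using sh(2) by simp
  qed
  finally show ?thesis .
qed


lemma length_merge[simp]: "length (merge bs v m) = length bs"
  by (induction bs v m rule: merge.induct) auto

lemma count_merge: "length v = count_list bs True \<Longrightarrow>
  count_list (merge bs v m) x = count_list v x + (if x = m then count_list bs False else 0)"
proof (induction bs arbitrary: v)
  case Nil then show ?case by simp
next
  case (Cons b bs)
  show ?case
  proof (cases b)
    case True
    then obtain y v' where "v = y # v'" using Cons.prems by (cases v) auto
    then show ?thesis using Cons True by auto
  next
    case False then show ?thesis using Cons by auto
  qed
qed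

lemma filter_merge: "\<not> P m \<Longrightarrow> length v = count_list bs True \<Longrightarrow> filter P (merge bs v m) = filter P v"
proof (induction bs arbitrary: v)
  case Nil then show ?case by simp
next
  case (Cons b bs)
  show ?case
  proof (cases b)
    case True
    then obtain y v' where "v = y # v'" using Cons.prems by (cases v) auto
    then show ?thesis using Cons True by auto
  next
    case False then show ?thesis using Cons by auto
  qed
qed

lemma fill_sub_merge: "\<not> P m \<Longrightarrow> length v = count_list bs True \<Longrightarrow>
  fill_sub P (merge bs v m) s = merge bs (fill_sub P v s) m"
proof (induction bs arbitrary: v s)
  case Nil then show ?case by simp
next
  case (Cons b bs)
  show ?case
  proof (cases b)
    case True
    then obtain y v' where "v = y # v'" using Cons.prems by (cases v) auto
    then show ?thesis using Cons True by (cases s) auto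
  next
    case False then show ?thesis using Cons by auto
  qed
qed

lemma f1z_merge: "m \<noteq> 1 \<Longrightarrow> length v = count_list bs True \<Longrightarrow>
  first_one_to_zero (merge bs v m) = merge bs (first_one_to_zero v) m"
proof (induction bs arbitrary: v)
  case Nil then show ?case by simp
next
  case (Cons b bs)
  show ?case
  proof (cases b)
    case True
    then obtain y v' where "v = y # v'" using Cons.prems by (cases v) auto
    then show ?thesis using Cons True by auto
  next
    case False then show ?thesis using Cons by auto
  qed
qed

lemma map_merge: "length v = count_list bs True \<Longrightarrow> map f (merge bs v m) = merge bs (map f v) (f m)"
proof (induction bs arbitrary: v)
  case Nil then show ?case by simp
next
  case (Cons b bs)
  show ?case
  proof (cases b)
    case True
    then obtain y v' where "v = y # v'" using Cons.prems by (cases v) auto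
    then show ?thesis using Cons True by auto
  next
    case False then show ?thesis using Cons by auto
  qed
qed

lemma sigma_merge:
  assumes "m \<noteq> a" "m \<noteq> Suc a" "length v = count_list bs True"
  shows "sigma a (merge bs v m) = merge bs (sigma a v) m"
proof -
  have ev: "\<And>x. x \<noteq> m \<Longrightarrow> ev (merge bs v m) x = ev v x" using count_merge[OF assms(3)] by (simp add: ev_def)
  have sc: "scond a (merge bs v m) = scond a v" using ev assms by (simp add: scond_def)
  have f: "filter (Pa a) (merge bs v m) = filter (Pa a) v" using assms by (intro filter_merge) (auto simp: Pa_def)
  show ?thesis using sc f assms by (simp add: sigma_alt fill_sub_merge Pa_def)
qed

lemma chain_merge: "Suc k < m \<Longrightarrow> length v = count_list bs True \<Longrightarrow>
  sigma_chain k (merge bs v m) = merge bs (sigma_chain k v) m"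
proof (induction k arbitrary: v)
  case 0 then show ?case by simp
next
  case (Suc k)
  have "sigma (Suc k) (merge bs v m) = merge bs (sigma (Suc k) v) m"
    using Suc.prems by (intro sigma_merge) auto
  then show ?case using Suc by (simp add: sigma_chain_Suc)
qed

lemma r_merge: "m \<noteq> 1 \<Longrightarrow> length v = count_list bs True \<Longrightarrow> r1101 (merge bs v m) = merge bs (r1101 v) m"
proof -
  assume a: "m \<noteq> 1" "length v = count_list bs True"
  have "ev (merge bs v m) 1 = ev v 1" using count_merge[OF a(2)] a(1) by (simp add: ev_def)
  then show ?thesis using a by (simp add: r1101_def f1z_merge)
qed

lemma tau_merge: "length v = count_list bs True \<Longrightarrow> tau1 (merge bs v m) = merge bs (tau1 v) (Suc m)"
  by (simp add: tau1_def map_merge)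

lemma hasc_merge:
  assumes h: "hasc v cs" and l: "length v = count_list bs True" and f: "count_list bs False = 2" and m: "m = Suc (length cs)"
  shows "hasc (merge bs v m) (cs @ [2])"
  unfolding hasc_def
proof
  fix x
  have "cf cs m = 0" using m by (simp add: cf_def)
  then show "ev (merge bs v m) x = cf (cs @ [2]) x"
    using count_merge[OF l, of m x] h f m by (auto simp: hasc_def ev_def cf_snoc)
qed

lemma Dop_merge:
  assumes v: "valid cs" and two: "2 \<in> set cs" and h: "hasc v cs" and l: "length v = count_list bs True"
    and f: "count_list bs False = 2" and m: "m = Suc (length cs)"
  shows "Dop (merge bs v m) = merge bs (Dop v) (Suc m)"
proof -
  obtain j rest where cs: "cs = replicate j 1 @ 2 # rest" using valid_split[OF v two] by blast
  have hm: "hasc (merge bs v m) (replicate j 1 @ 2 # (rest @ [2]))" using hasc_merge[OF h l f m] cs by simp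
  have d1: "Dop (merge bs v m) = tau1 (r1101 (sigma_chain j (merge bs v m)))" by (rule Dop_rep[OF hm])
  have d2: "Dop v = tau1 (r1101 (sigma_chain j v))" using Dop_rep[of v j rest] h cs by simp
  have jm: "Suc j < m" "m \<noteq> 1" using m cs by auto
  show ?thesis using d1 d2 jm l
    by (simp add: chain_merge r_merge tau_merge)
qed

lemma Dop_iter_merge:
  assumes "valid cs" "hasc v cs" "length v = count_list bs True" "count_list bs False = 2" "m = Suc (length cs)"
  shows "(Dop ^^ nd cs) (merge bs v m) = merge bs ((Dop ^^ nd cs) v) (m + nd cs)"
  using assms
proof (induction "nd cs" arbitrary: cs v m)
  case 0 then show ?case by simp
next
  case (Suc k)
  then have two: "2 \<in> set cs" using nd_zero by force
  have ndk: "nd (dc cs) = k" using Suc.hyps(2) nd_dc[OF two Suc.prems(1)] by simp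
  have e: "Dop (merge bs v m) = merge bs (Dop v) (Suc m)" using Dop_merge[OF Suc.prems(1) two Suc.prems(2-5)] .
  have IH: "(Dop ^^ k) (merge bs (Dop v) (Suc m)) = merge bs ((Dop ^^ k) (Dop v)) (Suc m + k)"
    using Suc.hyps(1)[OF ndk[symmetric] valid_dc[OF Suc.prems(1)] hasc_Dop[OF Suc.prems(1) two Suc.prems(2)]]
      Suc.prems(3,4,5) length_dc[OF two] ndk by simp
  have fp: "\<And>u. (Dop ^^ nd cs) u = (Dop ^^ k) (Dop u)"
    by (simp only: Suc.hyps(2)[symmetric] funpow_Suc_right o_apply)
  show ?case using fp e IH Suc.hyps(2)[symmetric] by simp
qed

lemma Dop_iter_content:
  assumes "valid cs" "hasc v cs"
  shows "hasc ((Dop ^^ nd cs) v) (replicate (length cs + nd cs) 1)"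
  using assms
proof (induction "nd cs" arbitrary: cs v)
  case 0
  then have "2 \<notin> set cs" using nd_zero by force
  then have "\<forall>y\<in>set cs. y = 1" using 0 by (auto simp: valid_def)
  then have "replicate (length cs) 1 = cs" by (rule replicate_length_same)
  then show ?case using 0 by simp
next
  case (Suc k)
  then have two: "2 \<in> set cs" using nd_zero by force
  have ndk: "nd (dc cs) = k" using Suc.hyps(2) nd_dc[OF two Suc.prems(1)] by simp
  have IH: "hasc ((Dop ^^ k) (Dop v)) (replicate (length (dc cs) + k) 1)"
    using Suc.hyps(1)[OF ndk[symmetric] valid_dc[OF Suc.prems(1)] hasc_Dop[OF Suc.prems(1) two Suc.prems(2)]] ndk by simp
  have fp: "(Dop ^^ nd cs) v = (Dop ^^ k) (Dop v)"
    by (simp only: Suc.hyps(2)[symmetric] funpow_Suc_right o_apply)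
  show ?case using fp IH length_dc[OF two] Suc.hyps(2)[symmetric] by simp
qed

lemma sum_cf: "(\<Sum>x\<le>length cs. cf cs x) = sum_list cs"
proof (induction cs rule: rev_induct)
  case Nil then show ?case by (simp add: cf_def)
next
  case (snoc c cs)
  have e: "\<And>x. cf (cs @ [c]) x = (if x = Suc (length cs) then c else cf cs x)"
    by (auto simp: cf_def nth_append)
  have "(\<Sum>x\<le>length (cs @ [c]). cf (cs @ [c]) x) = (\<Sum>x\<le>length cs. cf cs x) + c"
    by (simp add: e)
  then show ?case using snoc by simp
qed

lemma hasc_length: "hasc w cs \<Longrightarrow> length w = sum_list cs"
proof -
  assume h: "hasc w cs"
  have sub: "set w \<subseteq> {..length cs}" using letters_le[OF h] by auto
  have "length w = sum (count_list w) {..length cs}" using sum_count_set[OF sub] by simp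
  also have "\<dots> = (\<Sum>x\<le>length cs. cf cs x)" using h by (simp add: hasc_def ev_def)
  finally show ?thesis by (simp add: sum_cf)
qed

lemma valid_sum: "valid cs \<Longrightarrow> sum_list cs = length cs + nd cs"
  by (induction cs) (auto simp: valid_def nd_def)


lemma sum_pget: "length sh \<le> n \<Longrightarrow> (\<Sum>i<n. pget sh i) = sum_list sh"
proof -
  assume l: "length sh \<le> n"
  have eqs: "{..<n} \<inter> {i. i < length sh} = {..<length sh}" using l by auto
  have "(\<Sum>i<n. pget sh i) = (\<Sum>i<length sh. sh!i)" by (simp add: pget_def sum.If_cases eqs)
  also have "\<dots> = sum_list sh" by (simp add: sum_list_sum_nth atLeast0LessThan)
  finally show ?thesis .
qed

lemma count_maskS:
  assumes ls: "length sh \<le> length s'" and pg: "\<And>i. i < length s' \<Longrightarrow> pget sh i \<le> s'!i"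
    and sm: "sum_list s' = sum_list sh + 2"
  shows "count_list (maskS sh s') True = sum_list sh" "count_list (maskS sh s') False = 2"
proof -
  let ?f = "\<lambda>i. replicate (pget sh i) True @ replicate (s'!i - pget sh i) False"
  have c: "\<And>x. count_list (maskS sh s') x = (\<Sum>i<length s'. count_list (?f i) x)"
    unfolding maskS_def by (simp add: count_concat_rev)
  show "count_list (maskS sh s') True = sum_list sh"
    using c[of True] sum_pget[OF ls] by (simp add: count_list_replicate)
  have "count_list (maskS sh s') False = (\<Sum>i<length s'. s'!i - pget sh i)"
    using c[of False] by (simp add: count_list_replicate)
  also have "\<dots> = (\<Sum>i<length s'. s'!i) - (\<Sum>i<length s'. pget sh i)"
    using pg by (intro sum_subtractf_nat) auto
  also have "\<dots> = 2" using sum_pget[OF ls] sm by (simp add: sum_list_sum_nth atLeast0LessThan)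
  finally show "count_list (maskS sh s') False = 2" .
qed

lemma length_Dop_iter[simp]: "length ((Dop ^^ k) w) = length w"
  by (induction k) auto

lemma L2:
  assumes T: "T \<in> SSc cs" and v: "valid cs" and s: "s' \<in> add2_shapes (fst T)"
  shows "VS (add_cells (Suc (length cs)) T s') =
    on_tab (tau1 \<circ> r1101 \<circ> sigma_chain (length (snd T))) (add_cells (Suc (length (snd T))) (VS T) s')"
proof -
  obtain sh w where Tsw: "T = (sh, w)" by (cases T)
  have ss: "semistandard T" "hasc w cs" using T Tsw by (auto simp: SSc_def)
  have p: "is_partition sh" "length w = sum_list sh" using ss(1) Tsw by (auto simp: semistandard_def)
  let ?R = "rows T"
  have mR: "map length ?R = sh" using semistandard_rows[OF ss(1)] Tsw by (metis fst_conv fst_tab_of)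
  have s2: "s' \<in> add2_shapes (map length ?R)" using s mR Tsw by simp
  note ap = add2_props[OF _ s2, unfolded mR, OF p(1)]
  have ls: "length sh \<le> length s'" using ap(1) mR by (metis length_map)
  let ?bs = "maskS sh s'"
  have cT: "count_list ?bs True = length w" using count_maskS(1)[OF ls ap(2) ap(5)] p(2) by simp
  have cF: "count_list ?bs False = 2" using count_maskS(2)[OF ls ap(2) ap(5)] .
  define d where "d = nd cs"
  define n where "n = length w"
  have nd: "n = length cs + d" using hasc_length[OF ss(2)] valid_sum[OF v] by (simp add: n_def d_def)
  define vv where "vv = (Dop ^^ d) w"
  have VST: "VS T = (sh, vv)" using VS_eq[OF v ss(2)] Tsw by (simp add: vv_def d_def)
  have hv: "hasc vv (replicate n 1)" using Dop_iter_content[OF v ss(2)] nd by (simp add: vv_def d_def)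
  have lv: "length vv = count_list ?bs True" using cT by (simp add: vv_def)
  let ?M = "Suc (length cs)"
  have A1: "add_cells ?M T s' = (s', merge ?bs w ?M)" using add_cells_merge[OF p(2) ls] Tsw by simp
  have v2: "valid (cs @ [2])" using v by (simp add: valid_def)
  have hm: "hasc (merge ?bs w ?M) (cs @ [2])" using hasc_merge[OF ss(2) cT[symmetric] cF] by simp
  have "VS (add_cells ?M T s') = (s', (Dop ^^ nd (cs @ [2])) (merge ?bs w ?M))"
    using A1 VS_eq[OF v2 hm] by simp
  also have "nd (cs @ [2]) = Suc d" by (simp add: nd_def d_def)
  also have "(Dop ^^ Suc d) (merge ?bs w ?M) = Dop ((Dop ^^ d) (merge ?bs w ?M))" by simp
  also have "(Dop ^^ d) (merge ?bs w ?M) = merge ?bs vv (Suc n)"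
    using Dop_iter_merge[OF v ss(2) cT[symmetric] cF refl] nd by (simp add: vv_def d_def)
  also have "Dop (merge ?bs vv (Suc n)) = tau1 (r1101 (sigma_chain n (merge ?bs vv (Suc n))))"
  proof -
    have "hasc (merge ?bs vv (Suc n)) (replicate n 1 @ [2])" using hasc_merge[OF hv lv cF] by simp
    then show ?thesis using Dop_rep[of _ n "[]"] by simp
  qed
  also have "(s', tau1 (r1101 (sigma_chain n (merge ?bs vv (Suc n))))) =
      on_tab (tau1 \<circ> r1101 \<circ> sigma_chain (length (snd T))) (add_cells (Suc (length (snd T))) (VS T) s')"
  proof -
    have "length vv = sum_list sh" using p(2) by (simp add: vv_def)
    then have "add_cells (Suc n) (sh, vv) s' = (s', merge ?bs vv (Suc n))" by (rule add_cells_merge[OF _ ls])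
    then show ?thesis using VST Tsw by (simp add: on_tab_def n_def)
  qed
  finally show ?thesis .
qed


lemma lin_sum:
  assumes fin: "finite A"
  shows "lin F (\<lambda>S. \<Sum>x\<in>A. delta (f x) S) S' = (\<Sum>x\<in>A. F (f x) S')"
proof -
  let ?c = "\<lambda>S. \<Sum>x\<in>A. delta (f x) S"
  have sub: "{T. ?c T \<noteq> 0} \<subseteq> f ` A"
  proof
    fix T assume "T \<in> {T. ?c T \<noteq> 0}"
    then have "\<exists>x\<in>A. delta (f x) T \<noteq> 0" by (auto intro: ccontr simp: sum.neutral)
    then show "T \<in> f ` A" by (auto simp: delta_def split: if_splits)
  qed
  have "lin F ?c S' = (\<Sum>T\<in>{T. ?c T \<noteq> 0}. ?c T * F T S')" by (simp add: lin_def)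
  also have "\<dots> = (\<Sum>T\<in>f ` A. ?c T * F T S')"
    using sub fin by (intro sum.mono_neutral_left) auto
  also have "\<dots> = (\<Sum>T\<in>f ` A. \<Sum>x\<in>A. delta (f x) T * F T S')" by (simp add: sum_distrib_right)
  also have "\<dots> = (\<Sum>x\<in>A. \<Sum>T\<in>f ` A. delta (f x) T * F T S')" by (rule sum.swap)
  also have "\<dots> = (\<Sum>x\<in>A. F (f x) S')"
  proof (rule sum.cong)
    fix x assume x: "x \<in> A"
    have "(\<Sum>T\<in>f ` A. delta (f x) T * F T S') = (\<Sum>T\<in>f ` A. if f x = T then F T S' else 0)"
      by (rule sum.cong) (auto simp: delta_def)
    also have "\<dots> = F (f x) S'" using x fin by (simp add: sum.delta)
    finally show "(\<Sum>T\<in>f ` A. delta (f x) T * F T S') = F (f x) S'" .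
  qed simp
  finally show ?thesis .
qed

lemma indicator_sum: "(\<lambda>T. if T \<in> A then 1 else 0) = (\<lambda>S. \<Sum>x\<in>A. delta (id x) S)" if "finite A" for A :: "tableau set"
proof
  fix S
  have "(\<Sum>x\<in>A. delta (id x) S) = (\<Sum>x\<in>A. if S = x then 1 else 0)" by (simp add: delta_def)
  also have "\<dots> = (if S \<in> A then 1 else 0)" using that by (simp add: sum.delta)
  finally show "(if S \<in> A then 1 else 0) = (\<Sum>x\<in>A. delta (id x) S)" by simp
qed

lemma H_sum:
  assumes c: "\<And>i. conj_part lam i = cf cs i"
  shows "H lam S = (\<Sum>T\<in>SSc cs. delta (VS T) S)"
proof -
  have "(\<lambda>T. if semistandard T \<and> (\<forall>i. ev (snd T) i = conj_part lam i) then 1 else 0) =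
        (\<lambda>T. if T \<in> SSc cs then (1::int) else 0)"
    using c by (auto simp: SSc_def hasc_def)
  also have "\<dots> = (\<lambda>S. \<Sum>x\<in>SSc cs. delta (id x) S)" by (rule indicator_sum[OF finite_SSc])
  finally have e: "(\<lambda>T. if semistandard T \<and> (\<forall>i. ev (snd T) i = conj_part lam i) then 1 else 0) =
        (\<lambda>S. \<Sum>x\<in>SSc cs. delta (id x) S)" .
  show ?thesis unfolding H_def e by (simp add: lin_sum[OF finite_SSc])
qed

lemma B20_tab_sum:
  assumes p: "is_partition (fst T)"
  shows "B20_tab T S' = (\<Sum>s\<in>add2_shapes (fst T).
     delta (on_tab (tau1 \<circ> r1101 \<circ> sigma_chain (length (snd T))) (add_cells (Suc (length (snd T))) T s)) S')"
proof -
  have "A_op (length (snd T)) T = (\<lambda>S. \<Sum>s\<in>add2_shapes (fst T). delta (add_cells (Suc (length (snd T))) T s) S)"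
    by (simp add: A_op_def)
  then show ?thesis unfolding B20_tab_def Let_def
    by (simp add: lin_sum[OF finite_add2[OF p]] comp_def)
qed

lemma conj_lam:
  assumes "is_partition lam" "length lam \<le> 2"
  shows "pget lam 1 \<le> pget lam 0"
    "\<And>i. conj_part lam i = (if i = 0 then 0 else (if i \<le> pget lam 0 then 1 else 0) + (if i \<le> pget lam 1 then 1 else 0))"
proof -
  have cases: "lam = [] \<or> (\<exists>x. lam = [x] \<and> x \<noteq> 0) \<or> (\<exists>x y. lam = [x,y] \<and> y \<le> x \<and> y \<noteq> 0)"
    using assms by (cases lam rule: remdups_adj.cases) (auto simp: is_partition_def)
  then show "pget lam 1 \<le> pget lam 0" by (auto simp: pget_def)
  fix i
  show "conj_part lam i = (if i = 0 then 0 else (if i \<le> pget lam 0 then 1 else 0) + (if i \<le> pget lam 1 then 1 else 0))"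
    using cases by (auto simp: conj_part_def pget_def)
qed

lemma cf_rep: "b \<le> a \<Longrightarrow> cf (replicate b 2 @ replicate (a - b) 1) i =
  (if i = 0 then 0 else (if i \<le> a then 1 else 0) + (if i \<le> b then 1 else 0))"
  by (auto simp: cf_def nth_append)

theorem mainTheorem11:
  fixes lam :: "nat list"
  assumes "is_partition lam" and "length lam \<le> 2"
  shows "B20 (H lam) = H (plus11 lam)"
proof
  fix S'
  let ?a = "pget lam 0" and ?b = "pget lam 1"
  define cs where "cs = replicate ?b 2 @ replicate (?a - ?b) (1::nat)"
  note cl = conj_lam[OF assms]
  have c1: "\<And>i. conj_part lam i = cf cs i" using cl cf_rep[OF cl(1)] by (simp add: cs_def)
  have cfC: "\<And>k. cf (2 # cs) (Suc (Suc k)) = cf cs (Suc k)" "cf (2 # cs) (Suc 0) = 2"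
    by (auto simp: cf_def)
  have c2: "conj_part (plus11 lam) i = cf (2 # cs) i" for i
  proof (cases i)
    case 0 then show ?thesis by (simp add: conj_part_def cf_def)
  next
    case (Suc j)
    then have L: "conj_part (plus11 lam) i = (if j \<le> ?a then 1 else 0) + (if j \<le> ?b then 1 else 0)"
      by (simp add: conj_part_def plus11_def)
    show ?thesis
    proof (cases j)
      case 0 then show ?thesis using L Suc cfC by simp
    next
      case (Suc k)
      then show ?thesis using L \<open>i = Suc j\<close> cfC(1)[of k] cf_rep[OF cl(1), of "Suc k"] by (simp add: cs_def)
    qed
  qed
  have v: "valid cs" by (auto simp: cs_def valid_def)
  let ?G = "\<lambda>T'. delta (VS T') S'"
  have "B20 (H lam) S' = lin B20_tab (\<lambda>S. \<Sum>T\<in>SSc cs. delta (VS T) S) S'"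
  proof -
    have "H lam = (\<lambda>S. \<Sum>T\<in>SSc cs. delta (VS T) S)" by (intro ext H_sum[OF c1])
    then show ?thesis by (simp add: B20_def)
  qed
  also have "\<dots> = (\<Sum>T\<in>SSc cs. B20_tab (VS T) S')" by (rule lin_sum[OF finite_SSc])
  also have "\<dots> = (\<Sum>T\<in>SSc cs. \<Sum>s\<in>add2_shapes (fst T). ?G (add_cells (Suc (length cs)) T s))"
  proof (rule sum.cong)
    fix T assume T: "T \<in> SSc cs"
    obtain sh w where Tsw: "T = (sh, w)" by (cases T)
    have h: "hasc w cs" "semistandard T" using T Tsw by (auto simp: SSc_def)
    have VT: "VS T = (sh, (Dop ^^ nd cs) w)" using VS_eq[OF v h(1)] Tsw by simp
    have p: "is_partition (fst (VS T))" using h(2) VT Tsw by (simp add: semistandard_def)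
    have "B20_tab (VS T) S' = (\<Sum>s\<in>add2_shapes (fst T).
       delta (on_tab (tau1 \<circ> r1101 \<circ> sigma_chain (length (snd T))) (add_cells (Suc (length (snd T))) (VS T) s)) S')"
      using B20_tab_sum[OF p, of S'] VT Tsw by simp
    also have "\<dots> = (\<Sum>s\<in>add2_shapes (fst T). ?G (add_cells (Suc (length cs)) T s))"
      using L2[OF T v] by simp
    finally show "B20_tab (VS T) S' = (\<Sum>s\<in>add2_shapes (fst T). ?G (add_cells (Suc (length cs)) T s))" .
  qed simp
  also have "\<dots> = (\<Sum>T'\<in>SSc (cs @ [2]). ?G T')" by (rule claimA_sum[symmetric]) simp
  also have "\<dots> = (\<Sum>T'\<in>SSc (2 # cs). ?G T')"
    using claimB[where l="?b" and m="?a - ?b" and f="\<lambda>X. delta X S'"] by (simp add: cs_def)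
  also have "\<dots> = H (plus11 lam) S'" using H_sum[OF c2] by simp
  finally show "B20 (H lam) S' = H (plus11 lam) S'" .
qed


end
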